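(* Let $f_1,\dots,f_T\in\mathcal F_X(\alpha,l,G)$ be arbitrary, and run RHGD and RHAG (defined in the context) with prediction window $W\ge 0$ and stepsizes $\gamma=1/l$, $\eta=1/L$, where $L=l+4\beta$. Then $$\mathrm{Reg}(\mathrm{RHGD},\mathcal L_T)\le Q_f\,\delta\Big(1-\frac{1}{Q_f}\Big)^{W}L_T,\qquad \mathrm{Reg}(\mathrm{RHAG},\mathcal L_T)\le 2\delta\Big(1-\frac{1}{\sqrt{Q_f}}\Big)^{W}L_T,$$ where $\mathcal L_T=\mathcal L_T(L_T,\mathcal F_X(\alpha,l,G))$, $\delta=(\beta/l+1)\frac{G}{1-\kappa}$, $\kappa=\sqrt{1-\alpha/l}$ and $Q_f=\frac{l+4\beta}{\alpha}$.
   Context: Setting: $X\subseteq\mathbb R^n$ is nonempty, compact and convex with diameter $D$, i.e. $\|x-y\|\le D$ for all $x,y\in X$. The parameter $\beta\ge 0$, the initial point $x_0\in X$, and the horizon $T\ge 1$ are fixed, and $\Pi_X$ denotes Euclidean projection onto $X$. Function class: for $0<\alpha\le l$ and $G>0$, $\mathcal F_X(\alpha,l,G)$ is the set of differentiable $f:\mathbb R^n\to\mathbb R$ such that for all $x,y\in\mathbb R^n$ $$f(x)+\langle\nabla f(x),y-x\rangle+\tfrac{\alpha}{2}\|y-x\|^2\le f(y)\le f(x)+\langle\nabla f(x),y-x\rangle+\tfrac{l}{2}\|y-x\|^2,$$ and $\|\nabla f(x)\|\le G$ for all $x\in X$. Total cost: $C_1^T(x)=\sum_{t=1}^T\big(f_t(x_t)+\frac\beta2\|x_t-x_{t-1}\|^2\big)$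 for $x=(x_1,\dots,x_T)$, with $x_0$ the given initial point. Path length: let $\theta_t=\arg\min_{x\in X}f_t(x)$ and $\theta_0=x_0$. For $0\le L_T\le DT$, $\mathcal L_T(L_T,\mathcal F_X(\alpha,l,G))$ is the set of sequences $\{f_t\}_{t=1}^T\subseteq\mathcal F_X(\alpha,l,G)$ with $\sum_{t=1}^T\|\theta_t-\theta_{t-1}\|\le L_T$. Dynamic regret: for an algorithm producing outputs $x^{\mathcal A}=(x^{\mathcal A}_1,\dots,x^{\mathcal A}_T)$ (with $x_0^{\mathcal A}=x_0$), $$\mathrm{Reg}(\mathcal A,\mathcal L_T)=\sup_{\{f_t\}\in\mathcal L_T}\Big(C_1^T(x^{\mathcal A})-\min_{x\in X^T}C_1^T(x)\Big).$$ Partial gradients: for $t<T$, $g_t(a,b,c)=\nabla f_t(b)+\beta(2b-a-c)$; for $t=T$, $g_T(a,b,c)=\nabla f_T(b)+\beta(b-a)$, which does not depend on $c$. RHGD (Receding Horizon Gradient Descent). For each $t\in[T]$ it produces iterates $x_t^s$ for $s=t-W,\dots,t$. - Initialization (online gradient descent): $x_1^{1-W}=x_0$, and for $2\le t\le T$, $$x_t^{t-W}=\Pi_X\big(x_{t-1}^{t-1-W}-\gamma\nabla f_{t-1}(x_{t-1}^{t-1-W})\big).$$ - Updates: for $s=t-W+1,\dots,t$, $$x_t^s=\Pi_X\big(x_t^{s-1}-\eta\, g_t(x_{t-1}^{s-2},x_t^{s-1},x_{t+1}^{s})\big),$$ with the convention $x_0^{s}=x_0$ for all $s$. At each stage $s$,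 the indices $t$ are processed in decreasing order. - Output at stage $t$: $x_t^t$. RHAG (Receding Horizon Accelerated Gradient). Set $\lambda=\frac{1-\sqrt{\alpha\eta}}{1+\sqrt{\alpha\eta}}$. - Initialization: $x_t^{t-W}$ is defined as in RHGD, and $y_t^{t-W}=x_t^{t-W}$. - Updates: for $s=t-W+1,\dots,t$, $$x_t^s=\Pi_X\big(y_t^{s-1}-\eta\, g_t(y_{t-1}^{s-2},y_t^{s-1},y_{t+1}^s)\big),\qquad y_t^s=(1+\lambda)x_t^s-\lambda x_t^{s-1},$$ with the convention $y_0^s=x_0$. - Output at stage $t$: $x_t^t$. *)

theory Defs
  imports "HOL-Analysis.Analysis"
begin

definition grad :: "('a::euclidean_space \<Rightarrow> real) \<Rightarrow> 'a \<Rightarrow> 'a" where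
  "grad f x = (SOME g. (f has_derivative (\<lambda>h. g \<bullet> h)) (at x))"

definition Fclass :: "'a::euclidean_space set \<Rightarrow> real \<Rightarrow> real \<Rightarrow> real \<Rightarrow> ('a \<Rightarrow> real) set" where
  "Fclass X \<alpha> l G = {f. (\<forall>x. f differentiable (at x)) \<and>
     (\<forall>x y. f x + grad f x \<bullet> (y - x) + \<alpha> / 2 * (norm (y - x))\<^sup>2 \<le> f y \<and>
            f y \<le> f x + grad f x \<bullet> (y - x) + l / 2 * (norm (y - x))\<^sup>2) \<and>
     (\<forall>x\<in>X. norm (grad f x) \<le> G)}"

definition theta :: "'a::euclidean_space set \<Rightarrow> 'a \<Rightarrow> (nat \<Rightarrow> 'a \<Rightarrow> real) \<Rightarrow> nat \<Rightarrow> 'a" where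
  "theta X x0 fs t = (if t = 0 then x0 else arg_min_on (fs t) X)"

definition pathset :: "'a::euclidean_space set \<Rightarrow> 'a \<Rightarrow> nat \<Rightarrow> real \<Rightarrow> real \<Rightarrow> real \<Rightarrow> real
    \<Rightarrow> (nat \<Rightarrow> 'a \<Rightarrow> real) set" where
  "pathset X x0 T \<alpha> l G Lpath = {fs. (\<forall>t\<in>{1..T}. fs t \<in> Fclass X \<alpha> l G) \<and>
      (\<Sum>t=1..T. norm (theta X x0 fs t - theta X x0 fs (t - 1))) \<le> Lpath}"

definition cost :: "real \<Rightarrow> nat \<Rightarrow> 'a::euclidean_space \<Rightarrow> (nat \<Rightarrow> 'a \<Rightarrow> real) \<Rightarrow> (nat \<Rightarrow> 'a) \<Rightarrow> real" where
  "cost \<beta> T x0 fs x = (\<Sum>t=1..T. fs t (x t) + \<beta> / 2 * (norm (x t - (x(0 := x0)) (t - 1)))\<^sup>2)"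

definition opt_cost :: "'a::euclidean_space set \<Rightarrow> real \<Rightarrow> nat \<Rightarrow> 'a \<Rightarrow> (nat \<Rightarrow> 'a \<Rightarrow> real) \<Rightarrow> real" where
  "opt_cost X \<beta> T x0 fs = (INF x \<in> {x. \<forall>t\<in>{1..T}. x t \<in> X}. cost \<beta> T x0 fs x)"

definition Reg :: "'a::euclidean_space set \<Rightarrow> real \<Rightarrow> nat \<Rightarrow> 'a \<Rightarrow> real \<Rightarrow> real \<Rightarrow> real \<Rightarrow> real
    \<Rightarrow> ((nat \<Rightarrow> 'a \<Rightarrow> real) \<Rightarrow> nat \<Rightarrow> 'a) \<Rightarrow> ereal" where
  "Reg X \<beta> T x0 \<alpha> l G Lpath alg =
     (SUP fs \<in> pathset X x0 T \<alpha> l G Lpath. ereal (cost \<beta> T x0 fs (alg fs) - opt_cost X \<beta> T x0 fs))"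

fun ogd :: "'a::euclidean_space set \<Rightarrow> (nat \<Rightarrow> 'a \<Rightarrow> real) \<Rightarrow> 'a \<Rightarrow> real \<Rightarrow> nat \<Rightarrow> 'a" where
  "ogd X fs x0 \<gamma> 0 = x0"
| "ogd X fs x0 \<gamma> (Suc 0) = x0"
| "ogd X fs x0 \<gamma> (Suc (Suc k)) =
     closest_point X (ogd X fs x0 \<gamma> (Suc k) - \<gamma> *\<^sub>R grad (fs (Suc k)) (ogd X fs x0 \<gamma> (Suc k)))"

context
  fixes X :: "'a::euclidean_space set" and fs :: "nat \<Rightarrow> 'a \<Rightarrow> real" and x0 :: 'a
    and T W :: nat and \<beta> \<gamma> \<eta> lam :: real
begin

(* RHGD iterate x_t^s (t :: nat, s :: int); x_0^s = x0; x_t^{t-W} from OGD *)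
function rhgd_it :: "nat \<Rightarrow> int \<Rightarrow> 'a" where
  "rhgd_it t s =
    (if t = 0 \<or> t > T then x0
     else if s \<le> int t - int W then ogd X fs x0 \<gamma> t
     else
       (let a = rhgd_it (t - 1) (s - 2);
            b = rhgd_it t (s - 1);
            g = (if t = T then grad (fs t) b + \<beta> *\<^sub>R (b - a)
                 else grad (fs t) b + \<beta> *\<^sub>R (2 *\<^sub>R b - a - rhgd_it (t + 1) s))
        in closest_point X (b - \<eta> *\<^sub>R g)))"
  by pat_completeness auto
termination
  by (relation "measures [\<lambda>(t, s). nat (s + int W), \<lambda>(t, s). T - t]") auto

function rhag_it :: "nat \<Rightarrow> int \<Rightarrow> 'a \<times> 'a" where
  "rhag_it t s =
    (if t = 0 \<or> t > T then (x0, x0)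
     else if s \<le> int t - int W then (ogd X fs x0 \<gamma> t, ogd X fs x0 \<gamma> t)
     else
       (let a = snd (rhag_it (t - 1) (s - 2));
            p = rhag_it t (s - 1);
            b = snd p;
            g = (if t = T then grad (fs t) b + \<beta> *\<^sub>R (b - a)
                 else grad (fs t) b + \<beta> *\<^sub>R (2 *\<^sub>R b - a - snd (rhag_it (t + 1) s)));
            x = closest_point X (b - \<eta> *\<^sub>R g)
        in (x, (1 + lam) *\<^sub>R x - lam *\<^sub>R fst p)))"
  by pat_completeness auto
termination
  by (relation "measures [\<lambda>(t, s). nat (s + int W), \<lambda>(t, s). T - t]") auto

end

definition RHGD :: "'a::euclidean_space set \<Rightarrow> 'a \<Rightarrow> nat \<Rightarrow> nat \<Rightarrow> real \<Rightarrow> real \<Rightarrow> real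
    \<Rightarrow> (nat \<Rightarrow> 'a \<Rightarrow> real) \<Rightarrow> nat \<Rightarrow> 'a" where
  "RHGD X x0 T W \<beta> \<gamma> \<eta> fs t = rhgd_it X fs x0 T W \<beta> \<gamma> \<eta> t (int t)"

definition RHAG :: "'a::euclidean_space set \<Rightarrow> 'a \<Rightarrow> nat \<Rightarrow> nat \<Rightarrow> real \<Rightarrow> real \<Rightarrow> real \<Rightarrow> real
    \<Rightarrow> (nat \<Rightarrow> 'a \<Rightarrow> real) \<Rightarrow> nat \<Rightarrow> 'a" where
  "RHAG X x0 T W \<beta> \<gamma> \<eta> \<alpha> fs t =
     fst (rhag_it X fs x0 T W \<beta> \<gamma> \<eta>
           ((1 - sqrt (\<alpha> * \<eta>)) / (1 + sqrt (\<alpha> * \<eta>))) t (int t))"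

end

theory Submission
  imports Defs "HOL-Library.Function_Algebras"
begin

instantiation "fun" :: (type, real_vector) real_vector
begin
definition scaleR_fun :: "real \<Rightarrow> ('a \<Rightarrow> 'b) \<Rightarrow> 'a \<Rightarrow> 'b" where
  "scaleR_fun c f = (\<lambda>x. c *\<^sub>R f x)"
instance
  by standard (auto simp: scaleR_fun_def fun_eq_iff scaleR_add_right scaleR_add_left)
end

lemma scaleR_fun_apply [simp]: "(c *\<^sub>R f) x = c *\<^sub>R f x"
  by (simp add: scaleR_fun_def)

locale ipsp =
  fixes ip :: "'v::real_vector \<Rightarrow> 'v \<Rightarrow> real"
  assumes ip_add_left: "ip (x + y) z = ip x z + ip y z"
    and ip_scale_left: "ip (c *\<^sub>R x) z = c * ip x z"
    and ip_sym: "ip x y = ip y x"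
    and ip_nonneg: "ip x x \<ge> 0"
    and ip_degen: "ip x x = 0 \<Longrightarrow> ip x y = 0"
begin

lemma ip_add_right: "ip z (x + y) = ip z x + ip z y"
  using ip_add_left ip_sym by metis
lemma ip_scale_right: "ip z (c *\<^sub>R x) = c * ip z x"
  using ip_scale_left ip_sym by metis
lemma ip_zero_left: "ip 0 z = 0"
  using ip_scale_left[of 0] by simp
lemma ip_zero_right: "ip z 0 = 0"
  using ip_zero_left ip_sym by metis
lemma ip_minus_left: "ip (- x) z = - ip x z"
  using ip_scale_left[of "-1"] by simp
lemma ip_minus_right: "ip z (- x) = - ip z x"
  using ip_minus_left ip_sym by metis
lemma ip_diff_left: "ip (x - y) z = ip x z - ip y z"
  using ip_add_left[of x "-y"] ip_minus_left by simp
lemma ip_diff_right: "ip z (x - y) = ip z x - ip z y"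
  using ip_diff_left ip_sym by metis

lemmas ip_simps = ip_add_left ip_add_right ip_scale_left ip_scale_right ip_zero_left ip_zero_right
  ip_minus_left ip_minus_right ip_diff_left ip_diff_right

lemma gm:
  assumes L: "L > 0"
    and low: "f z \<ge> f y + ip g (z - y) + \<alpha> / 2 * ip (z - y) (z - y)"
    and up: "f xp \<le> f y + ip g (xp - y) + L / 2 * ip (xp - y) (xp - y)"
    and pr: "ip (y - (1 / L) *\<^sub>R g - xp) (z - xp) \<le> 0"
  shows "f z \<ge> f xp + ip (L *\<^sub>R (y - xp)) (z - y) + ip (L *\<^sub>R (y - xp)) (L *\<^sub>R (y - xp)) / (2 * L)
           + \<alpha> / 2 * ip (z - y) (z - y)"
proof -
  define d where "d = xp - y"
  define e where "e = z - y"
  have xp: "xp = y + d" and z: "z = y + e" by (simp_all add: d_def e_def)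
  have "y - (1 / L) *\<^sub>R g - xp = - d - (1 / L) *\<^sub>R g" "z - xp = e - d"
    by (simp_all add: xp z)
  with pr have pr': "- ip d e + ip d d - (1 / L) * ip g e + (1 / L) * ip g d \<le> 0"
    by (simp add: ip_simps ip_sym[of e d] ip_sym[of d g] ip_sym[of e g])
  have "L * (- ip d e + ip d d - (1 / L) * ip g e + (1 / L) * ip g d) \<le> 0"
    using pr' L by (simp add: mult_nonpos_nonneg mult_le_0_iff)
  hence pr2: "- L * ip d e + L * ip d d - ip g e + ip g d \<le> 0"
    using L by (simp add: algebra_simps)
  have "y - xp = - d" by (simp add: xp)
  have goal: "ip (L *\<^sub>R (y - xp)) (z - y) + ip (L *\<^sub>R (y - xp)) (L *\<^sub>R (y - xp)) / (2 * L)
     = - L * ip d e + L / 2 * ip d d"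
    unfolding \<open>y - xp = - d\<close> e_def[symmetric]
    using L by (simp add: ip_simps power2_eq_square field_simps)
  have low': "f z \<ge> f y + ip g e + \<alpha> / 2 * ip e e" using low by (simp add: e_def)
  have up': "f xp \<le> f y + ip g d + L / 2 * ip d d" using up by (simp add: d_def)
  have "f z \<ge> f xp + (- L * ip d e + L / 2 * ip d d) + \<alpha> / 2 * ip e e"
    using low' up' pr2 by linarith
  then show ?thesis using goal by (simp add: e_def)
qed

lemma ip_sq_swap: "ip (a - b) (a - b) = ip (b - a) (b - a)"
  by (simp add: ip_simps ip_sym[of a b])

lemma gd_step:
  assumes L: "L > 0"
    and gmz: "f xs \<ge> f xp + ip G (xs - y) + ip G G / (2 * L) + \<alpha> / 2 * ip (xs - y) (xs - y)"
    and G: "G = L *\<^sub>R (y - xp)"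
  shows "ip (xp - xs) (xp - xs) \<le> (1 - \<alpha> / L) * ip (y - xs) (y - xs) - (2 / L) * (f xp - f xs)"
proof -
  define b where "b = y - xs"
  have xp: "xp - xs = b - (1 / L) *\<^sub>R G" using L by (simp add: G b_def algebra_simps)
  have e1: "ip (xp - xs) (xp - xs) = ip b b - 2 / L * ip G b + ip G G / L^2"
    unfolding xp by (simp add: ip_simps ip_sym[of b G] power2_eq_square algebra_simps)
  have gmz': "ip G b \<ge> f xp - f xs + ip G G / (2 * L) + \<alpha> / 2 * ip b b"
  proof -
    have "xs - y = - b" by (simp add: b_def)
    thus ?thesis using gmz by (simp add: ip_minus_left ip_minus_right)
  qed
  have "(2 / L) * ip G b \<ge> (2 / L) * (f xp - f xs + ip G G / (2 * L) + \<alpha> / 2 * ip b b)"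
    using gmz' L by (intro mult_left_mono) auto
  also have "(2 / L) * (f xp - f xs + ip G G / (2 * L) + \<alpha> / 2 * ip b b)
     = (2 / L) * (f xp - f xs) + ip G G / L^2 + (\<alpha> / L) * ip b b"
    using L by (simp add: field_simps power2_eq_square)
  finally show ?thesis unfolding e1 b_def[symmetric] by (simp add: algebra_simps)
qed

lemma nest_step:
  assumes L: "L > 0" and q: "0 < q" "q \<le> 1" and qa: "q^2 = \<alpha> / L"
    and gm1: "f xk \<ge> f xp + ip G (xk - y) + ip G G / (2 * L) + \<alpha> / 2 * ip (xk - y) (xk - y)"
    and gm2: "f xs \<ge> f xp + ip G (xs - y) + ip G G / (2 * L) + \<alpha> / 2 * ip (xs - y) (xs - y)"
    and hv: "v' - xs = ((1 - q) *\<^sub>R (vk - xs) + q *\<^sub>R (y - xs)) - (q / \<alpha>) *\<^sub>R G"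
    and hz: "(1 - q) *\<^sub>R (xk - y) + q *\<^sub>R (xs - y) + q *\<^sub>R ((1 - q) *\<^sub>R (vk - xs) + q *\<^sub>R (y - xs)) = 0"
  shows "f xp - f xs + \<alpha> / 2 * ip (v' - xs) (v' - xs)
     \<le> (1 - q) * (f xk - f xs + \<alpha> / 2 * ip (vk - xs) (vk - xs))"
proof -
  have al: "\<alpha> > 0" using qa q L by (metis zero_less_power not_less not_less_iff_gr_or_eq divide_le_0_iff)
  have alL: "\<alpha> = q^2 * L" using qa L by (simp add: field_simps)
  define a where "a = vk - xs"
  define b where "b = y - xs"
  define w where "w = (1 - q) *\<^sub>R a + q *\<^sub>R b"
  have hvv: "v' - xs = w - (q / \<alpha>) *\<^sub>R G" using hv by (simp add: w_def a_def b_def)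
  have S3: "(1 - q) *\<^sub>R (xk - y) + q *\<^sub>R (xs - y) + q *\<^sub>R w = 0"
    using hz by (simp add: w_def a_def b_def)
  have S1: "ip (v' - xs) (v' - xs) = ip w w - 2 * (q / \<alpha>) * ip G w + (q / \<alpha>)^2 * ip G G"
    unfolding hvv by (simp add: ip_simps ip_sym[of w G] power2_eq_square algebra_simps)
  have S2: "ip w w \<le> (1 - q) * ip a a + q * ip b b"
  proof -
    have "0 \<le> q * (1 - q) * ip (a - b) (a - b)"
      using q ip_nonneg by simp
    moreover have "(1 - q) * ip a a + q * ip b b - ip w w = q * (1 - q) * ip (a - b) (a - b)"
      unfolding w_def by (simp add: ip_simps ip_sym[of b a] algebra_simps power2_eq_square)
    ultimately show ?thesis by linarith
  qed
  have S4: "(1 - q) * ip G (xk - y) + q * ip G (xs - y) + q * ip G w = 0"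
    using arg_cong[OF S3, of "ip G"] by (simp add: ip_simps)
  have h1: "(1 - q) * f xk \<ge> (1 - q) * (f xp + ip G (xk - y) + ip G G / (2 * L))"
  proof -
    have "f xk \<ge> f xp + ip G (xk - y) + ip G G / (2 * L)"
    proof -
      have "0 \<le> \<alpha> / 2 * ip (xk - y) (xk - y)" using al ip_nonneg[of "xk - y"] by simp
      thus ?thesis using gm1 by linarith
    qed
    thus ?thesis using q by (intro mult_left_mono) auto
  qed
  have h2: "q * f xs \<ge> q * (f xp + ip G (xs - y) + ip G G / (2 * L) + \<alpha> / 2 * ip b b)"
    using gm2 q ip_sq_swap[of xs y] by (intro mult_left_mono) (auto simp: b_def)
  have h3: "\<alpha> / 2 * ip w w \<le> \<alpha> / 2 * ((1 - q) * ip a a + q * ip b b)"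
    using S2 al by (intro mult_left_mono) auto
  have h4: "\<alpha> / 2 * ((q / \<alpha>)^2 * ip G G) = ip G G / (2 * L)"
    using al L alL q by (simp add: field_simps power2_eq_square)
  have h5: "\<alpha> / 2 * (2 * (q / \<alpha>) * ip G w) = q * ip G w"
    using al by (simp add: field_simps)
  have "f xp - f xs + \<alpha> / 2 * ip (v' - xs) (v' - xs)
      = f xp - f xs + \<alpha> / 2 * ip w w - q * ip G w + ip G G / (2 * L)"
    unfolding S1 using h4 h5 by (simp add: algebra_simps)
  also have "\<dots> \<le> (1 - q) * (f xk - f xs + \<alpha> / 2 * ip a a)"
  proof -
    have eq: "(1 - q) * (f xk - f xs + \<alpha> / 2 * ip a a)
        - (f xp - f xs + \<alpha> / 2 * ip w w - q * ip G w + ip G G / (2 * L))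
      = ((1 - q) * f xk - (1 - q) * (f xp + ip G (xk - y) + ip G G / (2 * L)))
      + (q * f xs - q * (f xp + ip G (xs - y) + ip G G / (2 * L) + \<alpha> / 2 * ip b b))
      + (\<alpha> / 2 * ((1 - q) * ip a a + q * ip b b) - \<alpha> / 2 * ip w w)
      + ((1 - q) * ip G (xk - y) + q * ip G (xs - y) + q * ip G w)"
      using L by (simp add: field_simps)
    show ?thesis using eq h1 h2 h3 S4 by linarith
  qed
  finally show ?thesis by (simp add: a_def)
qed

end

definition ipT :: "nat \<Rightarrow> (nat \<Rightarrow> 'a::real_inner) \<Rightarrow> (nat \<Rightarrow> 'a) \<Rightarrow> real" where
  "ipT T u v = (\<Sum>t=1..T. u t \<bullet> v t)"

lemma ipT_nonneg: "ipT T x x \<ge> 0"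
  unfolding ipT_def by (intro sum_nonneg) auto

interpretation ipT: ipsp "ipT T"
proof
  fix x y z :: "nat \<Rightarrow> 'a" and c :: real
  show "ipT T (x + y) z = ipT T x z + ipT T y z"
    by (simp add: ipT_def inner_add_left sum.distrib)
  show "ipT T (c *\<^sub>R x) z = c * ipT T x z"
    by (simp add: ipT_def sum_distrib_left)
  show "ipT T x y = ipT T y x"
    by (simp add: ipT_def inner_commute)
  show "ipT T x x \<ge> 0" by (rule ipT_nonneg)
  assume "ipT T x x = 0"
  hence "\<forall>t\<in>{1..T}. x t \<bullet> x t = 0"
    unfolding ipT_def by (subst sum_nonneg_eq_0_iff[symmetric]) auto
  thus "ipT T x y = 0" by (simp add: ipT_def)
qed

interpretation inner: ipsp "inner :: 'a::real_inner \<Rightarrow> 'a \<Rightarrow> real"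
proof
  fix x y z :: 'a and c :: real
  show "(x + y) \<bullet> z = x \<bullet> z + y \<bullet> z" by (rule inner_add_left)
  show "(c *\<^sub>R x) \<bullet> z = c * (x \<bullet> z)" by simp
  show "x \<bullet> y = y \<bullet> x" by (rule inner_commute)
  show "0 \<le> x \<bullet> x" by simp
  assume "x \<bullet> x = 0" thus "x \<bullet> y = 0" by simp
qed

lemma shift_sum:
  fixes h :: "nat \<Rightarrow> real"
  shows "(\<Sum>t=1..n. h (t - 1)) + h n = (\<Sum>t=1..n. h t) + h 0"
  by (induction n) auto

lemma shift_sum_le:
  fixes h :: "nat \<Rightarrow> real"
  assumes "h 0 = 0" "\<And>t. h t \<ge> 0"
  shows "(\<Sum>t=1..n. h (t - 1)) \<le> (\<Sum>t=1..n. h t)"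
  using shift_sum[of h n] assms by (metis add.right_neutral le_add_same_cancel1)

lemma by_parts:
  fixes u d :: "nat \<Rightarrow> 'a::real_inner"
  shows "(\<Sum>t=1..n. u t \<bullet> (if t = 1 then 0 else d (t - 1)))
       = (\<Sum>t=1..n. (if t < n then u (t + 1) \<bullet> d t else 0))"
proof (induction n)
  case 0
  then show ?case by simp
next
  case (Suc n)
  have A: "(\<Sum>t=1..Suc n. (if t < Suc n then u (t + 1) \<bullet> d t else 0)) = (\<Sum>t=1..n. u (t + 1) \<bullet> d t)"
    by (simp add: sum.cl_ivl_Suc)
  have B: "(\<Sum>t=1..n. (if t < n then u (t + 1) \<bullet> d t else 0)) + (if n \<ge> 1 then u (n + 1) \<bullet> d n else 0)
     = (\<Sum>t=1..n. u (t + 1) \<bullet> d t)"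
  proof (cases n)
    case 0 then show ?thesis by simp
  next
    case (Suc m)
    then show ?thesis by (simp add: sum.cl_ivl_Suc)
  qed
  show ?case
  proof (cases "n = 0")
    case True then show ?thesis by simp
  next
    case False
    then have "n \<ge> 1" by simp
    then show ?thesis using Suc.IH A B by (simp add: sum.cl_ivl_Suc)
  qed
qed

definition gC :: "(nat \<Rightarrow> 'a::euclidean_space \<Rightarrow> real) \<Rightarrow> 'a \<Rightarrow> nat \<Rightarrow> real \<Rightarrow> (nat \<Rightarrow> 'a) \<Rightarrow> nat \<Rightarrow> 'a" where
  "gC fs x0 T \<beta> x t = grad (fs t) (x t) + \<beta> *\<^sub>R ((x t - (if t = 1 then x0 else x (t - 1)))
       - (if t < T then x (t + 1) - x t else 0))"

lemma cost_alt: "cost \<beta> T x0 fs x = (\<Sum>t=1..T. fs t (x t) + \<beta> / 2 * (norm (x t - (if t = 1 then x0 else x (t - 1))))\<^sup>2)"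
  unfolding cost_def by (intro sum.cong) auto

lemma cost_cong:
  assumes h: "\<And>t. t \<in> {1..T} \<Longrightarrow> x t = y t"
  shows "cost \<beta> T x0 fs x = cost \<beta> T x0 fs y"
  unfolding cost_alt
proof (intro sum.cong refl)
  fix t assume t: "t \<in> {1..T}"
  have "t \<noteq> 1 \<Longrightarrow> x (t - 1) = y (t - 1)" using t by (intro h) auto
  thus "fs t (x t) + \<beta> / 2 * (norm (x t - (if t = 1 then x0 else x (t - 1))))\<^sup>2 =
        fs t (y t) + \<beta> / 2 * (norm (y t - (if t = 1 then x0 else y (t - 1))))\<^sup>2"
    using h[OF t] by auto
qed

lemma cost_expand:
  fixes x y :: "nat \<Rightarrow> 'a::euclidean_space"
  shows "cost \<beta> T x0 fs y = cost \<beta> T x0 fs x + ipT T (gC fs x0 T \<beta> x) (y - x)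
     + (\<Sum>t=1..T. fs t (y t) - fs t (x t) - grad (fs t) (x t) \<bullet> (y t - x t))
     + \<beta> / 2 * (\<Sum>t=1..T. (norm ((y t - x t) - (if t = 1 then 0 else y (t - 1) - x (t - 1))))\<^sup>2)"
proof -
  define u where "u t = x t - (if t = 1 then x0 else x (t - 1))" for t
  define d where "d t = y t - x t" for t
  define w where "w t = d t - (if t = 1 then 0 else d (t - 1))" for t
  have e1: "(norm (y t - (if t = 1 then x0 else y (t - 1))))\<^sup>2 = (norm (u t))\<^sup>2 + 2 * (u t \<bullet> w t) + (norm (w t))\<^sup>2" for t
  proof -
    have "y t - (if t = 1 then x0 else y (t - 1)) = u t + w t"
      by (simp add: u_def w_def d_def)
    thus ?thesis by (simp add: power2_norm_eq_inner inner_add_left inner_add_right inner_commute)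
  qed
  have e2: "(\<Sum>t=1..T. u t \<bullet> w t) = (\<Sum>t=1..T. u t \<bullet> d t) - (\<Sum>t=1..T. (if t < T then u (t + 1) \<bullet> d t else 0))"
  proof -
    have "(\<Sum>t=1..T. u t \<bullet> w t) = (\<Sum>t=1..T. u t \<bullet> d t - u t \<bullet> (if t = 1 then 0 else d (t - 1)))"
      unfolding w_def by (simp add: inner_diff_right)
    also have "\<dots> = (\<Sum>t=1..T. u t \<bullet> d t) - (\<Sum>t=1..T. u t \<bullet> (if t = 1 then 0 else d (t - 1)))"
      by (rule sum_subtractf)
    finally show ?thesis using by_parts[of u d T] by simp
  qed
  have e3: "ipT T (gC fs x0 T \<beta> x) (y - x) = (\<Sum>t=1..T. grad (fs t) (x t) \<bullet> d t)
      + \<beta> * ((\<Sum>t=1..T. u t \<bullet> d t) - (\<Sum>t=1..T. (if t < T then u (t + 1) \<bullet> d t else 0)))"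
  proof -
    have "ipT T (gC fs x0 T \<beta> x) (y - x) = (\<Sum>t=1..T. grad (fs t) (x t) \<bullet> d t
       + \<beta> * (u t \<bullet> d t - (if t < T then u (t + 1) \<bullet> d t else 0)))"
      unfolding ipT_def
    proof (intro sum.cong refl)
      fix t assume t: "t \<in> {1..T}"
      have "u (t + 1) = x (t + 1) - x t" using t by (simp add: u_def)
      then show "gC fs x0 T \<beta> x t \<bullet> (y - x) t = grad (fs t) (x t) \<bullet> d t
       + \<beta> * (u t \<bullet> d t - (if t < T then u (t + 1) \<bullet> d t else 0))"
        by (simp add: gC_def u_def d_def inner_add_left inner_diff_left)
    qed
    also have "\<dots> = (\<Sum>t=1..T. grad (fs t) (x t) \<bullet> d t)
      + \<beta> * ((\<Sum>t=1..T. u t \<bullet> d t) - (\<Sum>t=1..T. (if t < T then u (t + 1) \<bullet> d t else 0)))"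
      by (simp add: sum.distrib right_diff_distrib sum_subtractf sum_distrib_left)
    finally show ?thesis .
  qed
  have cy: "cost \<beta> T x0 fs y = (\<Sum>t=1..T. fs t (y t)) + \<beta> / 2 * (\<Sum>t=1..T. (norm (u t))\<^sup>2)
      + \<beta> * (\<Sum>t=1..T. u t \<bullet> w t) + \<beta> / 2 * (\<Sum>t=1..T. (norm (w t))\<^sup>2)"
    unfolding cost_alt e1 by (simp add: sum.distrib sum_distrib_left algebra_simps)
  have cx: "cost \<beta> T x0 fs x = (\<Sum>t=1..T. fs t (x t)) + \<beta> / 2 * (\<Sum>t=1..T. (norm (u t))\<^sup>2)"
    unfolding cost_alt u_def by (simp add: sum.distrib sum_distrib_left)
  have wd: "(norm ((y t - x t) - (if t = 1 then 0 else y (t - 1) - x (t - 1)))) = norm (w t)" for t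
    by (simp add: w_def d_def)
  show ?thesis unfolding cy cx e2 e3 wd
    by (simp add: d_def sum.distrib sum_subtractf algebra_simps)
qed


lemma Fclass_D:
  assumes "f \<in> Fclass X \<alpha> l G"
  shows "f x + grad f x \<bullet> (y - x) + \<alpha> / 2 * (norm (y - x))\<^sup>2 \<le> f y"
    and "f y \<le> f x + grad f x \<bullet> (y - x) + l / 2 * (norm (y - x))\<^sup>2"
    and "x \<in> X \<Longrightarrow> norm (grad f x) \<le> G"
    and "f differentiable (at x)"
  using assms unfolding Fclass_def by auto

lemma norm_diff_sq_le: "(norm (a - b))\<^sup>2 \<le> 2 * (norm a)\<^sup>2 + 2 * (norm (b::'a::real_inner))\<^sup>2"
proof -
  have "0 \<le> (norm (a + b))\<^sup>2" by simp
  moreover have "(norm (a - b))\<^sup>2 + (norm (a + b))\<^sup>2 = 2 * (norm a)\<^sup>2 + 2 * (norm b)\<^sup>2"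
    by (simp add: power2_norm_eq_inner inner_add_left inner_add_right inner_diff_left inner_diff_right inner_commute)
  ultimately show ?thesis by linarith
qed

lemma switch_bound:
  fixes d :: "nat \<Rightarrow> 'a::real_inner"
  shows "(\<Sum>t=1..T. (norm (d t - (if t = 1 then 0 else d (t - 1))))\<^sup>2) \<le> 4 * ipT T d d"
proof -
  define h where "h s = (if s = 0 then 0 else (norm (d s))\<^sup>2)" for s
  have "(\<Sum>t=1..T. (norm (d t - (if t = 1 then 0 else d (t - 1))))\<^sup>2)
      \<le> (\<Sum>t=1..T. 2 * (norm (d t))\<^sup>2 + 2 * h (t - 1))"
  proof (intro sum_mono)
    fix t assume t: "t \<in> {1..T}"
    have "(norm (if t = 1 then 0 else d (t - 1)))\<^sup>2 = h (t - 1)" using t by (auto simp: h_def)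
    thus "(norm (d t - (if t = 1 then 0 else d (t - 1))))\<^sup>2 \<le> 2 * (norm (d t))\<^sup>2 + 2 * h (t - 1)"
      using norm_diff_sq_le[of "d t" "if t = 1 then 0 else d (t - 1)"] by simp
  qed
  also have "\<dots> = 2 * (\<Sum>t=1..T. (norm (d t))\<^sup>2) + 2 * (\<Sum>t=1..T. h (t - 1))"
    by (simp add: sum.distrib sum_distrib_left)
  also have "(\<Sum>t=1..T. h (t - 1)) \<le> (\<Sum>t=1..T. h t)"
    by (rule shift_sum_le) (auto simp: h_def)
  also have "(\<Sum>t=1..T. h t) = (\<Sum>t=1..T. (norm (d t))\<^sup>2)"
    by (intro sum.cong) (auto simp: h_def)
  finally show ?thesis by (simp add: ipT_def power2_norm_eq_inner)
qed

context
  fixes X :: "'a::euclidean_space set" and x0 :: 'a and fs :: "nat \<Rightarrow> 'a \<Rightarrow> real"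
    and T :: nat and \<beta> \<alpha> l G :: real
  assumes Fc: "\<forall>t\<in>{1..T}. fs t \<in> Fclass X \<alpha> l G" and bpos: "\<beta> \<ge> 0"
begin

lemma costA:
  "cost \<beta> T x0 fs y \<ge> cost \<beta> T x0 fs x + ipT T (gC fs x0 T \<beta> x) (y - x) + \<alpha> / 2 * ipT T (y - x) (y - x)"
proof -
  have "(\<Sum>t=1..T. fs t (y t) - fs t (x t) - grad (fs t) (x t) \<bullet> (y t - x t))
      \<ge> (\<Sum>t=1..T. \<alpha> / 2 * ((y - x) t \<bullet> (y - x) t))"
  proof (intro sum_mono)
    fix t assume "t \<in> {1..T}"
    then have "fs t \<in> Fclass X \<alpha> l G" using Fc by auto
    from Fclass_D(1)[OF this, of "x t" "y t"]
    show "\<alpha> / 2 * ((y - x) t \<bullet> (y - x) t) \<le> fs t (y t) - fs t (x t) - grad (fs t) (x t) \<bullet> (y t - x t)"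
      by (simp add: power2_norm_eq_inner)
  qed
  moreover have "(\<Sum>t=1..T. \<alpha> / 2 * ((y - x) t \<bullet> (y - x) t)) = \<alpha> / 2 * ipT T (y - x) (y - x)"
    by (simp add: ipT_def sum_distrib_left)
  moreover have "0 \<le> \<beta> / 2 * (\<Sum>t=1..T. (norm ((y t - x t) - (if t = 1 then 0 else y (t - 1) - x (t - 1))))\<^sup>2)"
    using bpos by (intro mult_nonneg_nonneg sum_nonneg) auto
  ultimately show ?thesis using cost_expand[of \<beta> T x0 fs y x] by linarith
qed

lemma costB:
  "cost \<beta> T x0 fs y \<le> cost \<beta> T x0 fs x + ipT T (gC fs x0 T \<beta> x) (y - x) + (l + 4 * \<beta>) / 2 * ipT T (y - x) (y - x)"
proof -
  have "(\<Sum>t=1..T. fs t (y t) - fs t (x t) - grad (fs t) (x t) \<bullet> (y t - x t))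
      \<le> (\<Sum>t=1..T. l / 2 * ((y - x) t \<bullet> (y - x) t))"
  proof (intro sum_mono)
    fix t assume "t \<in> {1..T}"
    then have "fs t \<in> Fclass X \<alpha> l G" using Fc by auto
    from Fclass_D(2)[OF this, of "y t" "x t"]
    show "fs t (y t) - fs t (x t) - grad (fs t) (x t) \<bullet> (y t - x t) \<le> l / 2 * ((y - x) t \<bullet> (y - x) t)"
      by (simp add: power2_norm_eq_inner)
  qed
  moreover have "(\<Sum>t=1..T. l / 2 * ((y - x) t \<bullet> (y - x) t)) = l / 2 * ipT T (y - x) (y - x)"
    by (simp add: ipT_def sum_distrib_left)
  moreover have "\<beta> / 2 * (\<Sum>t=1..T. (norm ((y t - x t) - (if t = 1 then 0 else y (t - 1) - x (t - 1))))\<^sup>2)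
      \<le> \<beta> / 2 * (4 * ipT T (y - x) (y - x))"
  proof (intro mult_left_mono)
    have "(\<lambda>t. y t - x t) = y - x" by (simp add: fun_eq_iff)
    then show "(\<Sum>t=1..T. (norm ((y t - x t) - (if t = 1 then 0 else y (t - 1) - x (t - 1))))\<^sup>2)
      \<le> 4 * ipT T (y - x) (y - x)"
      using switch_bound[of "\<lambda>t. y t - x t" T] by simp
  qed (use bpos in auto)
  ultimately show ?thesis using cost_expand[of \<beta> T x0 fs y x] by (simp add: algebra_simps)
qed

lemma joint_gm:
  assumes Xc: "convex X" "closed X" and lpos: "l > 0"
    and z: "\<forall>t\<in>{1..T}. z t \<in> X"
    and xp: "\<forall>t\<in>{1..T}. xp t = closest_point X (y t - (1 / (l + 4 * \<beta>)) *\<^sub>R gC fs x0 T \<beta> y t)"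
  shows "cost \<beta> T x0 fs z \<ge> cost \<beta> T x0 fs xp + ipT T ((l + 4 * \<beta>) *\<^sub>R (y - xp)) (z - y)
    + ipT T ((l + 4 * \<beta>) *\<^sub>R (y - xp)) ((l + 4 * \<beta>) *\<^sub>R (y - xp)) / (2 * (l + 4 * \<beta>))
    + \<alpha> / 2 * ipT T (z - y) (z - y)"
proof (rule ipT.gm)
  show "l + 4 * \<beta> > 0" using lpos bpos by simp
  show "cost \<beta> T x0 fs y + ipT T (gC fs x0 T \<beta> y) (z - y) + \<alpha> / 2 * ipT T (z - y) (z - y) \<le> cost \<beta> T x0 fs z"
    by (rule costA)
  show "cost \<beta> T x0 fs xp \<le> cost \<beta> T x0 fs y + ipT T (gC fs x0 T \<beta> y) (xp - y) + (l + 4 * \<beta>) / 2 * ipT T (xp - y) (xp - y)"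
    by (rule costB)
  show "ipT T (y - (1 / (l + 4 * \<beta>)) *\<^sub>R gC fs x0 T \<beta> y - xp) (z - xp) \<le> 0"
    unfolding ipT_def
  proof (intro sum_nonpos)
    fix t assume t: "t \<in> {1..T}"
    define a where "a = y t - (1 / (l + 4 * \<beta>)) *\<^sub>R gC fs x0 T \<beta> y t"
    have Xne: "X \<noteq> {}" using z t by auto
    have xpt: "xp t = closest_point X a" using xp t by (simp add: a_def)
    have "(a - closest_point X a) \<bullet> (z t - closest_point X a) \<le> 0"
      using Xc Xne z t by (intro any_closest_point_dot) (auto intro: closest_point_in_set closest_point_le)
    then show "(y - (1 / (l + 4 * \<beta>)) *\<^sub>R gC fs x0 T \<beta> y - xp) t \<bullet> (z - xp) t \<le> 0"
      by (simp add: xpt a_def)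
  qed
qed

end


lemma exists_min:
  fixes X :: "'a::euclidean_space set" and fs :: "nat \<Rightarrow> 'a \<Rightarrow> real"
  assumes Xc: "compact X" and x0: "x0 \<in> X"
    and cont: "\<And>t. t \<in> {1..T} \<Longrightarrow> continuous_on UNIV (fs t)"
  shows "\<exists>xs. (\<forall>t\<in>{1..T}. xs t \<in> X) \<and> opt_cost X \<beta> T x0 fs = cost \<beta> T x0 fs xs
     \<and> (\<forall>z. (\<forall>t\<in>{1..T}. z t \<in> X) \<longrightarrow> cost \<beta> T x0 fs xs \<le> cost \<beta> T x0 fs z)"
proof -
  define S where "S t = (if t \<in> {1..T} then X else {x0})" for t
  define KK where "KK = PiE UNIV S"
  have "compactin (product_topology (\<lambda>i. euclidean) UNIV) KK"
    unfolding KK_def compactin_PiE using Xc by (auto simp: S_def)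
  hence cK: "compact KK" by (simp add: euclidean_product_topology)
  have neK: "KK \<noteq> {}"
  proof -
    have "(\<lambda>_. x0) \<in> KK" using x0 by (auto simp: KK_def S_def)
    thus ?thesis by auto
  qed
  have cc: "continuous_on KK (cost \<beta> T x0 fs)"
    unfolding cost_alt
  proof (intro continuous_on_sum)
    fix t assume t: "t \<in> {1..T}"
    have c1: "continuous_on KK (\<lambda>x. fs t (x t))"
      using continuous_on_compose2[OF cont[OF t] continuous_on_product_coordinates[of t]]
      by (meson continuous_on_subset subset_UNIV)
    have c2: "continuous_on KK (\<lambda>x. (norm (x t - (if t = 1 then x0 else x (t - 1))))\<^sup>2)"
    proof (cases "t = 1")
      case True
      then show ?thesis
        by (auto intro!: continuous_intros continuous_on_subset[OF continuous_on_product_coordinates])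
    next
      case False
      then show ?thesis
        by (auto intro!: continuous_intros continuous_on_subset[OF continuous_on_product_coordinates])
    qed
    show "continuous_on KK (\<lambda>x. fs t (x t) + \<beta> / 2 * (norm (x t - (if t = 1 then x0 else x (t - 1))))\<^sup>2)"
      by (intro continuous_on_add continuous_on_mult continuous_on_const c1 c2)
  qed
  obtain xs where xs: "xs \<in> KK" and xsmin: "\<And>y. y \<in> KK \<Longrightarrow> cost \<beta> T x0 fs xs \<le> cost \<beta> T x0 fs y"
    using continuous_attains_inf[OF cK neK cc] by blast
  have xsX: "\<forall>t\<in>{1..T}. xs t \<in> X"
  proof
    fix t assume t: "t \<in> {1..T}"
    have "xs t \<in> S t" using xs by (auto simp: KK_def PiE_iff)
    thus "xs t \<in> X" using t by (simp add: S_def)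
  qed
  have allz: "cost \<beta> T x0 fs xs \<le> cost \<beta> T x0 fs z" if z: "\<forall>t\<in>{1..T}. z t \<in> X" for z
  proof -
    define z' where "z' t = (if t \<in> {1..T} then z t else x0)" for t
    have "z' \<in> KK" using z x0 by (auto simp: KK_def S_def z'_def)
    hence "cost \<beta> T x0 fs xs \<le> cost \<beta> T x0 fs z'" by (rule xsmin)
    also have "cost \<beta> T x0 fs z' = cost \<beta> T x0 fs z" by (rule cost_cong) (simp add: z'_def)
    finally show ?thesis .
  qed
  have "opt_cost X \<beta> T x0 fs = cost \<beta> T x0 fs xs"
    unfolding opt_cost_def
  proof (rule antisym)
    show "(INF x \<in> {x. \<forall>t\<in>{1..T}. x t \<in> X}. cost \<beta> T x0 fs x) \<le> cost \<beta> T x0 fs xs"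
    proof (rule cINF_lower)
      show "xs \<in> {x. \<forall>t\<in>{1..T}. x t \<in> X}" using xsX by simp
      show "bdd_below (cost \<beta> T x0 fs ` {x. \<forall>t\<in>{1..T}. x t \<in> X})"
        unfolding bdd_below_def using allz by blast
    qed
    show "cost \<beta> T x0 fs xs \<le> (INF x \<in> {x. \<forall>t\<in>{1..T}. x t \<in> X}. cost \<beta> T x0 fs x)"
    proof (rule cINF_greatest)
      show "{x. \<forall>t\<in>{1..T}. x t \<in> X} \<noteq> {}" using x0 by (auto intro!: exI[of _ "\<lambda>_. x0"])
    qed (use allz in auto)
  qed
  then show ?thesis using xsX allz by blast
qed


declare rhgd_it.simps[simp del] rhag_it.simps[simp del]

lemma two_b_eq: "2 *\<^sub>R b - a - c = (b - a) - (c - (b::'a::real_vector))"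
  by (simp add: scaleR_2 algebra_simps)

context
  fixes X :: "'a::euclidean_space set" and fs :: "nat \<Rightarrow> 'a \<Rightarrow> real" and x0 :: 'a
    and T W :: nat and \<beta> \<gamma> \<eta> lam :: real
begin

definition XG :: "nat \<Rightarrow> nat \<Rightarrow> 'a" where
  "XG k t = (if t \<in> {1..T} then rhgd_it X fs x0 T W \<beta> \<gamma> \<eta> t (int t - int W + int k) else 0)"

lemma XG0: "t \<in> {1..T} \<Longrightarrow> XG 0 t = ogd X fs x0 \<gamma> t"
  unfolding XG_def by (subst rhgd_it.simps) auto

lemma XG_out: "t \<in> {1..T} \<Longrightarrow> RHGD X x0 T W \<beta> \<gamma> \<eta> fs t = XG W t"
  unfolding XG_def RHGD_def by simp

lemma XG_step:
  assumes t: "t \<in> {1..T}"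
  shows "XG (Suc k) t = closest_point X (XG k t - \<eta> *\<^sub>R gC fs x0 T \<beta> (XG k) t)"
proof -
  define s where "s = int t - int W + int (Suc k)"
  have a: "rhgd_it X fs x0 T W \<beta> \<gamma> \<eta> (t - 1) (s - 2) = (if t = 1 then x0 else XG k (t - 1))"
  proof (cases "t = 1")
    case True then show ?thesis by (subst rhgd_it.simps) simp
  next
    case False
    have e: "s - 2 = int (t - 1) - int W + int k" using t False by (simp add: s_def of_nat_diff)
    have t1: "t - 1 \<in> {1..T}" using t False by auto
    have "rhgd_it X fs x0 T W \<beta> \<gamma> \<eta> (t - 1) (s - 2) = XG k (t - 1)"
      unfolding e XG_def using t1 by simp
    then show ?thesis using False by simp
  qed
  have e1: "s - 1 = int t - int W + int k" by (simp add: s_def)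
  have e2: "s = int (t + 1) - int W + int k" by (simp add: s_def)
  have b: "rhgd_it X fs x0 T W \<beta> \<gamma> \<eta> t (s - 1) = XG k t"
    unfolding e1 XG_def using t by simp
  have c: "t < T \<Longrightarrow> rhgd_it X fs x0 T W \<beta> \<gamma> \<eta> (t + 1) s = XG k (t + 1)"
    unfolding XG_def using t by (subst e2) simp
  have "XG (Suc k) t = rhgd_it X fs x0 T W \<beta> \<gamma> \<eta> t s"
    using t by (simp add: XG_def s_def)
  also have "\<dots> = closest_point X (XG k t - \<eta> *\<^sub>R gC fs x0 T \<beta> (XG k) t)"
  proof -
    have nc: "\<not> (t = 0 \<or> T < t)" "\<not> s \<le> int t - int W" using t by (auto simp: s_def)
    have gq: "(if t = T then grad (fs t) (XG k t) + \<beta> *\<^sub>R (XG k t - (if t = 1 then x0 else XG k (t - 1)))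
       else grad (fs t) (XG k t) + \<beta> *\<^sub>R (2 *\<^sub>R XG k t - (if t = 1 then x0 else XG k (t - 1))
          - rhgd_it X fs x0 T W \<beta> \<gamma> \<eta> (t + 1) s)) = gC fs x0 T \<beta> (XG k) t"
    proof (cases "t = T")
      case True then show ?thesis by (simp add: gC_def)
    next
      case False
      then have "t < T" using t by auto
      then show ?thesis using False unfolding two_b_eq c[OF \<open>t < T\<close>] by (simp add: gC_def)
    qed
    show ?thesis
      apply (subst rhgd_it.simps)
      apply (simp only: Let_def a b if_not_P[OF nc(1)] if_not_P[OF nc(2)])
      apply (simp only: gq)
      done
  qed
  finally show ?thesis .
qed

definition XA :: "nat \<Rightarrow> nat \<Rightarrow> 'a" where
  "XA k t = (if t \<in> {1..T} then fst (rhag_it X fs x0 T W \<beta> \<gamma> \<eta> lam t (int t - int W + int k)) else 0)"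
definition YA :: "nat \<Rightarrow> nat \<Rightarrow> 'a" where
  "YA k t = (if t \<in> {1..T} then snd (rhag_it X fs x0 T W \<beta> \<gamma> \<eta> lam t (int t - int W + int k)) else 0)"

lemma XA0: "t \<in> {1..T} \<Longrightarrow> XA 0 t = ogd X fs x0 \<gamma> t"
  unfolding XA_def by (subst rhag_it.simps) auto
lemma YA0: "YA 0 = XA 0"
  unfolding XA_def YA_def fun_eq_iff by (subst (1 2) rhag_it.simps) auto

lemma XA_step:
  assumes t: "t \<in> {1..T}"
  shows "XA (Suc k) t = closest_point X (YA k t - \<eta> *\<^sub>R gC fs x0 T \<beta> (YA k) t)"
    and "YA (Suc k) t = (1 + lam) *\<^sub>R XA (Suc k) t - lam *\<^sub>R XA k t"
proof -
  define s where "s = int t - int W + int (Suc k)"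
  have a: "snd (rhag_it X fs x0 T W \<beta> \<gamma> \<eta> lam (t - 1) (s - 2)) = (if t = 1 then x0 else YA k (t - 1))"
  proof (cases "t = 1")
    case True then show ?thesis by (subst rhag_it.simps) simp
  next
    case False
    have e: "s - 2 = int (t - 1) - int W + int k" using t False by (simp add: s_def of_nat_diff)
    have t1: "t - 1 \<in> {1..T}" using t False by auto
    have "snd (rhag_it X fs x0 T W \<beta> \<gamma> \<eta> lam (t - 1) (s - 2)) = YA k (t - 1)"
      unfolding e YA_def using t1 by simp
    then show ?thesis using False by simp
  qed
  have e1: "s - 1 = int t - int W + int k" by (simp add: s_def)
  have e2: "s = int (t + 1) - int W + int k" by (simp add: s_def)
  have b: "snd (rhag_it X fs x0 T W \<beta> \<gamma> \<eta> lam t (s - 1)) = YA k t"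
    unfolding e1 YA_def using t by simp
  have b2: "fst (rhag_it X fs x0 T W \<beta> \<gamma> \<eta> lam t (s - 1)) = XA k t"
    unfolding e1 XA_def using t by simp
  have c: "t < T \<Longrightarrow> snd (rhag_it X fs x0 T W \<beta> \<gamma> \<eta> lam (t + 1) s) = YA k (t + 1)"
    unfolding YA_def using t by (subst e2) simp
  have nc: "\<not> (t = 0 \<or> T < t)" "\<not> s \<le> int t - int W" using t by (auto simp: s_def)
  have gq: "(if t = T then grad (fs t) (YA k t) + \<beta> *\<^sub>R (YA k t - (if t = 1 then x0 else YA k (t - 1)))
       else grad (fs t) (YA k t) + \<beta> *\<^sub>R (2 *\<^sub>R YA k t - (if t = 1 then x0 else YA k (t - 1))
          - snd (rhag_it X fs x0 T W \<beta> \<gamma> \<eta> lam (t + 1) s))) = gC fs x0 T \<beta> (YA k) t"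
  proof (cases "t = T")
    case True then show ?thesis by (simp add: gC_def)
  next
    case False
    then have "t < T" using t by auto
    then show ?thesis using False unfolding two_b_eq c[OF \<open>t < T\<close>] by (simp add: gC_def)
  qed
  have eq: "rhag_it X fs x0 T W \<beta> \<gamma> \<eta> lam t s =
     (closest_point X (YA k t - \<eta> *\<^sub>R gC fs x0 T \<beta> (YA k) t),
      (1 + lam) *\<^sub>R closest_point X (YA k t - \<eta> *\<^sub>R gC fs x0 T \<beta> (YA k) t) - lam *\<^sub>R XA k t)"
    apply (subst rhag_it.simps)
    apply (simp only: Let_def a b b2 if_not_P[OF nc(1)] if_not_P[OF nc(2)])
    apply (simp only: gq)
    done
  show "XA (Suc k) t = closest_point X (YA k t - \<eta> *\<^sub>R gC fs x0 T \<beta> (YA k) t)"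
    using t eq by (simp add: XA_def s_def)
  show "YA (Suc k) t = (1 + lam) *\<^sub>R XA (Suc k) t - lam *\<^sub>R XA k t"
    using t eq by (simp add: XA_def YA_def s_def)
qed

end


lemma contraction:
  fixes X :: "'a::euclidean_space set"
  assumes F: "f \<in> Fclass X \<alpha> l G" and Xc: "convex X" "closed X" and th: "\<theta> \<in> X"
    and thmin: "\<forall>y\<in>X. f \<theta> \<le> f y" and al: "0 < \<alpha>" "\<alpha> \<le> l"
  shows "norm (closest_point X (x - (1 / l) *\<^sub>R grad f x) - \<theta>) \<le> sqrt (1 - \<alpha> / l) * norm (x - \<theta>)"
proof -
  define xp where "xp = closest_point X (x - (1 / l) *\<^sub>R grad f x)"
  have lpos: "l > 0" using al by simp
  have Xne: "X \<noteq> {}" using th by auto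
  have xpX: "xp \<in> X" unfolding xp_def using Xc Xne by (intro closest_point_in_set) auto
  have gmz: "f \<theta> \<ge> f xp + (l *\<^sub>R (x - xp)) \<bullet> (\<theta> - x) + (l *\<^sub>R (x - xp)) \<bullet> (l *\<^sub>R (x - xp)) / (2 * l)
           + \<alpha> / 2 * ((\<theta> - x) \<bullet> (\<theta> - x))"
  proof (rule inner.gm)
    show "0 < l" by (rule lpos)
    show "f x + grad f x \<bullet> (\<theta> - x) + \<alpha> / 2 * ((\<theta> - x) \<bullet> (\<theta> - x)) \<le> f \<theta>"
      using Fclass_D(1)[OF F, of x \<theta>] by (simp add: power2_norm_eq_inner)
    show "f xp \<le> f x + grad f x \<bullet> (xp - x) + l / 2 * ((xp - x) \<bullet> (xp - x))"
      using Fclass_D(2)[OF F, of xp x] by (simp add: power2_norm_eq_inner)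
    show "(x - (1 / l) *\<^sub>R grad f x - xp) \<bullet> (\<theta> - xp) \<le> 0"
      unfolding xp_def using Xc Xne th
      by (intro any_closest_point_dot) (auto intro: closest_point_in_set closest_point_le)
  qed
  have "(xp - \<theta>) \<bullet> (xp - \<theta>) \<le> (1 - \<alpha> / l) * ((x - \<theta>) \<bullet> (x - \<theta>)) - (2 / l) * (f xp - f \<theta>)"
    by (rule inner.gd_step[OF lpos gmz refl])
  also have "\<dots> \<le> (1 - \<alpha> / l) * ((x - \<theta>) \<bullet> (x - \<theta>))"
    using thmin xpX lpos by simp
  finally have sq: "(norm (xp - \<theta>))\<^sup>2 \<le> (sqrt (1 - \<alpha> / l) * norm (x - \<theta>))\<^sup>2"
    using al by (simp add: power2_norm_eq_inner power_mult_distrib)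
  have "\<alpha> / l \<le> 1" using al by simp
  hence "0 \<le> sqrt (1 - \<alpha> / l) * norm (x - \<theta>)" by (intro mult_nonneg_nonneg) auto
  with sq show ?thesis unfolding xp_def[symmetric] using power2_le_imp_le by blast
qed

lemma theta_min:
  fixes X :: "'a::euclidean_space set"
  assumes Xc: "compact X" "X \<noteq> {}" and F: "f \<in> Fclass X \<alpha> l G"
  shows "arg_min_on f X \<in> X \<and> (\<forall>y\<in>X. f (arg_min_on f X) \<le> f y)"
proof -
  have "continuous_on X f"
    using Fclass_D(4)[OF F] by (meson differentiable_imp_continuous_within continuous_at_imp_continuous_on)
  then obtain m where m: "m \<in> X" "\<forall>y\<in>X. f m \<le> f y"
    using continuous_attains_inf[OF Xc(1) Xc(2)] by blast
  have "\<exists>x. is_arg_min f (\<lambda>x. x \<in> X) x"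
    using m by (auto simp: is_arg_min_linorder)
  hence "is_arg_min f (\<lambda>x. x \<in> X) (arg_min_on f X)"
    unfolding arg_min_on_def arg_min_def by (rule someI_ex)
  thus ?thesis by (auto simp: is_arg_min_linorder)
qed

lemma ogd_in:
  fixes X :: "'a::euclidean_space set"
  assumes "closed X" "X \<noteq> {}" "x0 \<in> X"
  shows "ogd X fs x0 \<gamma> t \<in> X"
  using assms by (induction X fs x0 \<gamma> t rule: ogd.induct) (auto intro: closest_point_in_set)

lemma ogd_bound:
  fixes X :: "'a::euclidean_space set"
  assumes Xc: "compact X" "convex X" "X \<noteq> {}" and x0: "x0 \<in> X"
    and al: "0 < \<alpha>" "\<alpha> \<le> l" and bpos: "\<beta> \<ge> 0" and Gpos: "G \<ge> 0"
    and Fc: "\<forall>t\<in>{1..T}. fs t \<in> Fclass X \<alpha> l G"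
    and xsX: "\<forall>t\<in>{1..T}. xs t \<in> X"
  shows "cost \<beta> T x0 fs (\<lambda>t. ogd X fs x0 (1 / l) t) - cost \<beta> T x0 fs xs
    \<le> (\<beta> / l + 1) * (G / (1 - sqrt (1 - \<alpha> / l))) * (\<Sum>t=1..T. norm (theta X x0 fs t - theta X x0 fs (t - 1)))"
proof -
  define \<kappa> where "\<kappa> = sqrt (1 - \<alpha> / l)"
  define ox where "ox t = ogd X fs x0 (1 / l) t" for t
  define th where "th t = theta X x0 fs t" for t
  define e where "e t = norm (ox t - th t)" for t
  define d where "d t = norm (th t - th (t - 1))" for t
  have lpos: "l > 0" using al by simp
  have k0: "0 \<le> \<kappa>" and k1: "\<kappa> < 1"
  proof -
    have "0 < \<alpha> / l" "\<alpha> / l \<le> 1" using al by auto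
    thus "0 \<le> \<kappa>" "\<kappa> < 1" unfolding \<kappa>_def by auto
  qed
  have clX: "closed X" using Xc by (simp add: compact_imp_closed)
  have thmn: "th t \<in> X \<and> (\<forall>y\<in>X. fs t (th t) \<le> fs t y)" if t: "t \<in> {1..T}" for t
  proof -
    have "t \<noteq> 0" using t by auto
    moreover have "fs t \<in> Fclass X \<alpha> l G" using Fc t by auto
    ultimately show ?thesis unfolding th_def theta_def using theta_min[OF Xc(1) Xc(3)] by simp
  qed
  have oX: "ox t \<in> X" for t unfolding ox_def using ogd_in[OF clX Xc(3) x0] .
  have o1: "ox 1 = x0" by (simp add: ox_def)
  have oS: "ox (Suc n) = closest_point X (ox n - (1 / l) *\<^sub>R grad (fs n) (ox n))" if n1: "n \<ge> 1" for n
  proof -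
    obtain k where "n = Suc k" using n1 by (cases n) auto
    thus ?thesis by (simp add: ox_def)
  qed
  have th0: "th 0 = x0" by (simp add: th_def theta_def)
  have e0: "e 0 = 0" by (simp add: e_def th0 ox_def)
  have e_nonneg: "e t \<ge> 0" for t by (simp add: e_def)
  have contr: "norm (ox (Suc n) - th n) \<le> \<kappa> * e n" if n: "n \<in> {1..T}" for n
  proof -
    have "norm (closest_point X (ox n - (1 / l) *\<^sub>R grad (fs n) (ox n)) - th n) \<le> \<kappa> * norm (ox n - th n)"
      unfolding \<kappa>_def using thmn[OF n] Fc n al Xc(2) clX by (intro contraction) auto
    thus ?thesis using oS[of n] n by (simp add: e_def)
  qed
  have estep: "e (Suc n) \<le> \<kappa> * e n + d (Suc n)" if n: "Suc n \<le> T" for n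
  proof (cases "n = 0")
    case True
    then show ?thesis using e0 by (simp add: e_def d_def ox_def th0 norm_minus_commute)
  next
    case False
    then have nT: "n \<in> {1..T}" using n by auto
    have "e (Suc n) \<le> norm (ox (Suc n) - th n) + norm (th n - th (Suc n))"
      unfolding e_def by (rule norm_triangle_sub[of _ "th n", simplified] | metis norm_diff_triangle_le order_refl)
    also have "\<dots> \<le> \<kappa> * e n + d (Suc n)"
      using contr[OF nT] by (simp add: d_def norm_minus_commute)
    finally show ?thesis .
  qed
  have sumE: "(1 - \<kappa>) * (\<Sum>t=1..n. e t) + \<kappa> * e n \<le> (\<Sum>t=1..n. d t)" if "n \<le> T" for n
    using that
  proof (induction n)
    case 0 then show ?case using e0 by simp
  next
    case (Suc n)
    then have IH: "(1 - \<kappa>) * (\<Sum>t=1..n. e t) + \<kappa> * e n \<le> (\<Sum>t=1..n. d t)" by simp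
    have "(1 - \<kappa>) * (\<Sum>t=1..Suc n. e t) + \<kappa> * e (Suc n) = (1 - \<kappa>) * (\<Sum>t=1..n. e t) + e (Suc n)"
      by (simp add: algebra_simps)
    also have "\<dots> \<le> (\<Sum>t=1..n. d t) + d (Suc n)" using IH estep[OF Suc.prems] by linarith
    finally show ?case by simp
  qed
  define ee where "ee s = (if s = 0 then 0 else e s)" for s
  have sw: "\<beta> / 2 * (norm (ox t - (if t = 1 then x0 else ox (t - 1))))\<^sup>2 \<le> \<beta> * G / l * ee (t - 1)"
    if t: "t \<in> {1..T}" for t
  proof (cases "t = 1")
    case True then show ?thesis by (simp add: ox_def ee_def)
  next
    case False
    then obtain n where tn: "t = Suc n" and n1: "n \<ge> 1" using t by (cases t) auto
    have nT: "n \<in> {1..T}" using t tn n1 by auto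
    have "norm (ox t - ox n) = norm (closest_point X (ox n - (1 / l) *\<^sub>R grad (fs n) (ox n)) - closest_point X (ox n))"
      using oS[OF n1] closest_point_self[OF oX[of n]] by (simp add: tn)
    also have "\<dots> \<le> norm ((ox n - (1 / l) *\<^sub>R grad (fs n) (ox n)) - ox n)"
      using closest_point_lipschitz[OF Xc(2) clX Xc(3)] unfolding dist_norm by blast
    also have "\<dots> = (1 / l) * norm (grad (fs n) (ox n))" using lpos by simp
    also have "\<dots> \<le> (1 / l) * G"
      using Fclass_D(3)[of "fs n" X \<alpha> l G "ox n"] Fc nT oX lpos by (intro mult_left_mono) auto
    finally have A: "norm (ox t - ox n) \<le> G / l" by simp
    have "norm (ox t - ox n) \<le> norm (ox t - th n) + norm (th n - ox n)"
      by (metis norm_diff_triangle_le order_refl)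
    also have "\<dots> \<le> \<kappa> * e n + e n" using contr[OF nT] by (simp add: tn e_def norm_minus_commute)
    also have "\<dots> \<le> 2 * e n"
    proof -
      have "\<kappa> * e n \<le> e n" using k0 k1 e_nonneg[of n] by (intro mult_left_le_one_le) auto
      thus ?thesis by linarith
    qed
    finally have B: "norm (ox t - ox n) \<le> 2 * e n" .
    have "(norm (ox t - ox n))\<^sup>2 \<le> (G / l) * (2 * e n)"
      unfolding power2_eq_square using A B Gpos lpos by (intro mult_mono) auto
    hence "\<beta> / 2 * (norm (ox t - ox n))\<^sup>2 \<le> \<beta> / 2 * ((G / l) * (2 * e n))"
      using bpos by (intro mult_left_mono) auto
    thus ?thesis using tn n1 by (simp add: ee_def)
  qed
  have fpart: "fs t (ox t) - fs t (th t) \<le> G * e t" if t: "t \<in> {1..T}" for t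
  proof -
    have F: "fs t \<in> Fclass X \<alpha> l G" using Fc t by auto
    have "fs t (ox t) + grad (fs t) (ox t) \<bullet> (th t - ox t) + \<alpha> / 2 * (norm (th t - ox t))\<^sup>2 \<le> fs t (th t)"
      by (rule Fclass_D(1)[OF F])
    moreover have "0 \<le> \<alpha> / 2 * (norm (th t - ox t))\<^sup>2" using al by simp
    moreover have "grad (fs t) (ox t) \<bullet> (ox t - th t) \<le> norm (grad (fs t) (ox t)) * e t"
      unfolding e_def by (rule norm_cauchy_schwarz)
    moreover have "norm (grad (fs t) (ox t)) * e t \<le> G * e t"
      using Fclass_D(3)[OF F oX[of t]] e_nonneg by (intro mult_right_mono) auto
    moreover have "grad (fs t) (ox t) \<bullet> (th t - ox t) = - (grad (fs t) (ox t) \<bullet> (ox t - th t))"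
      by (simp add: inner_diff_right)
    ultimately show ?thesis by linarith
  qed
  have cxs: "cost \<beta> T x0 fs xs \<ge> (\<Sum>t=1..T. fs t (th t))"
    unfolding cost_alt
  proof (intro sum_mono)
    fix t assume t: "t \<in> {1..T}"
    have "fs t (th t) \<le> fs t (xs t)" using thmn[OF t] xsX t by auto
    moreover have "0 \<le> \<beta> / 2 * (norm (xs t - (if t = 1 then x0 else xs (t - 1))))\<^sup>2" using bpos by simp
    ultimately show "fs t (th t) \<le> fs t (xs t) + \<beta> / 2 * (norm (xs t - (if t = 1 then x0 else xs (t - 1))))\<^sup>2"
      by linarith
  qed
  have "cost \<beta> T x0 fs ox - (\<Sum>t=1..T. fs t (th t)) = (\<Sum>t=1..T. (fs t (ox t) - fs t (th t))
        + \<beta> / 2 * (norm (ox t - (if t = 1 then x0 else ox (t - 1))))\<^sup>2)"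
    unfolding cost_alt by (simp add: sum_subtractf[symmetric] algebra_simps)
  also have "\<dots> \<le> (\<Sum>t=1..T. G * e t + \<beta> * G / l * ee (t - 1))"
    by (intro sum_mono add_mono fpart sw)
  also have "\<dots> = G * (\<Sum>t=1..T. e t) + \<beta> * G / l * (\<Sum>t=1..T. ee (t - 1))"
    by (simp add: sum.distrib sum_distrib_left)
  finally have s1: "cost \<beta> T x0 fs ox - (\<Sum>t=1..T. fs t (th t)) \<le> G * (\<Sum>t=1..T. e t) + \<beta> * G / l * (\<Sum>t=1..T. ee (t - 1))" .
  have "(\<Sum>t=1..T. ee (t - 1)) \<le> (\<Sum>t=1..T. ee t)"
    by (rule shift_sum_le) (auto simp: ee_def e_nonneg)
  also have "(\<Sum>t=1..T. ee t) = (\<Sum>t=1..T. e t)" by (intro sum.cong) (auto simp: ee_def)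
  finally have s2: "\<beta> * G / l * (\<Sum>t=1..T. ee (t - 1)) \<le> \<beta> * G / l * (\<Sum>t=1..T. e t)"
    using bpos Gpos lpos by (intro mult_left_mono) auto
  have s3: "(\<beta> / l + 1) * G * (\<Sum>t=1..T. e t) = G * (\<Sum>t=1..T. e t) + \<beta> * G / l * (\<Sum>t=1..T. e t)"
    by (simp add: algebra_simps)
  have c1: "cost \<beta> T x0 fs ox - (\<Sum>t=1..T. fs t (th t)) \<le> (\<beta> / l + 1) * G * (\<Sum>t=1..T. e t)"
    using s1 s2 s3 by linarith
  have "(1 - \<kappa>) * (\<Sum>t=1..T. e t) \<le> (\<Sum>t=1..T. d t)"
  proof -
    have "0 \<le> \<kappa> * e T" using k0 e_nonneg[of T] by simp
    thus ?thesis using sumE[of T] by linarith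
  qed
  hence sE: "(\<Sum>t=1..T. e t) \<le> (\<Sum>t=1..T. d t) / (1 - \<kappa>)"
    using k1 by (simp add: field_simps)
  have cf: "0 \<le> (\<beta> / l + 1) * G" using bpos Gpos lpos by simp
  have "(\<beta> / l + 1) * G * (\<Sum>t=1..T. e t) \<le> (\<beta> / l + 1) * G * ((\<Sum>t=1..T. d t) / (1 - \<kappa>))"
    using sE cf by (rule mult_left_mono)
  also have "\<dots> = (\<beta> / l + 1) * (G / (1 - \<kappa>)) * (\<Sum>t=1..T. d t)" by simp
  finally have fin: "cost \<beta> T x0 fs ox - cost \<beta> T x0 fs xs \<le> (\<beta> / l + 1) * (G / (1 - \<kappa>)) * (\<Sum>t=1..T. d t)"
    using c1 cxs by linarith
  have oxeq: "(\<lambda>t. ogd X fs x0 (1 / l) t) = ox" by (simp add: fun_eq_iff ox_def)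
  have deq: "(\<Sum>t=1..T. norm (theta X x0 fs t - theta X x0 fs (t - 1))) = (\<Sum>t=1..T. d t)"
    by (simp add: d_def th_def)
  show ?thesis unfolding oxeq deq using fin by (simp add: \<kappa>_def)
qed


lemma gd_chain:
  fixes r c :: "nat \<Rightarrow> real"
  assumes L: "L > 0" and al: "0 < \<alpha>" "\<alpha> \<le> L"
    and st: "\<And>k. r (Suc k) \<le> (1 - \<alpha> / L) * r k - (2 / L) * c (Suc k)"
    and c0: "\<And>k. c k \<ge> 0" and rnn: "\<And>k. r k \<ge> 0" and r0: "r 0 \<le> (2 / \<alpha>) * c 0"
  shows "c n \<le> (L / \<alpha>) * (1 - \<alpha> / L) ^ n * c 0"
proof -
  define \<rho> where "\<rho> = 1 - \<alpha> / L"
  have \<rho>0: "0 \<le> \<rho>" using al L by (simp add: \<rho>_def)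
  have st': "r (Suc k) \<le> \<rho> * r k - (2 / L) * c (Suc k)" for k using st[of k] by (simp add: \<rho>_def)
  have rb: "r k \<le> \<rho> ^ k * r 0" for k
  proof (induction k)
    case 0 then show ?case by simp
  next
    case (Suc k)
    have "0 \<le> (2 / L) * c (Suc k)" using c0[of "Suc k"] L by simp
    hence "r (Suc k) \<le> \<rho> * r k" using st'[of k] by linarith
    also have "\<dots> \<le> \<rho> * (\<rho> ^ k * r 0)" using Suc \<rho>0 by (intro mult_left_mono) auto
    finally show ?case by simp
  qed
  show ?thesis
  proof (cases n)
    case 0
    have "1 \<le> L / \<alpha>" using al by simp
    hence "1 * c 0 \<le> (L / \<alpha>) * c 0" using c0[of 0] by (intro mult_right_mono) auto
    then show ?thesis using 0 by simp
  next
    case (Suc m)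
    have "(2 / L) * c n \<le> \<rho> * r m" using st'[of m] rnn[of n] Suc by simp
    also have "\<dots> \<le> \<rho> * (\<rho> ^ m * r 0)" using rb[of m] \<rho>0 by (intro mult_left_mono) auto
    also have "\<dots> \<le> \<rho> * (\<rho> ^ m * ((2 / \<alpha>) * c 0))" using r0 \<rho>0 by (intro mult_left_mono) auto
    finally have "(2 / L) * c n \<le> \<rho> ^ n * ((2 / \<alpha>) * c 0)" using Suc by simp
    hence "(L / 2) * ((2 / L) * c n) \<le> (L / 2) * (\<rho> ^ n * ((2 / \<alpha>) * c 0))"
      using L by (intro mult_left_mono) auto
    then show ?thesis using L al by (simp add: \<rho>_def field_simps)
  qed
qed

lemma nest_chain:
  fixes \<Phi> :: "nat \<Rightarrow> real"
  assumes q: "q \<le> 1" and st: "\<And>k. \<Phi> (Suc k) \<le> (1 - q) * \<Phi> k"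
  shows "\<Phi> n \<le> (1 - q) ^ n * \<Phi> 0"
proof (induction n)
  case 0 then show ?case by simp
next
  case (Suc n)
  have "\<Phi> (Suc n) \<le> (1 - q) * \<Phi> n" by (rule st)
  also have "\<dots> \<le> (1 - q) * ((1 - q) ^ n * \<Phi> 0)" using Suc q by (intro mult_left_mono) auto
  finally show ?case by simp
qed


lemma XA_out: "t \<in> {1..T} \<Longrightarrow> RHAG X x0 T W \<beta> \<gamma> \<eta> \<alpha> fs t
   = XA X fs x0 T W \<beta> \<gamma> \<eta> ((1 - sqrt (\<alpha> * \<eta>)) / (1 + sqrt (\<alpha> * \<eta>))) W t"
  unfolding XA_def RHAG_def by simp

lemma fun_coord_eq:
  fixes f g :: "nat \<Rightarrow> 'a::euclidean_space"
  assumes "\<And>t i. i \<in> Basis \<Longrightarrow> f t \<bullet> i = g t \<bullet> i"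
  shows "f = g"
  using assms by (simp add: fun_eq_iff euclidean_eq_iff[where 'a='a])

lemma vec_hz:
  fixes xk y vk xs :: "nat \<Rightarrow> 'a::euclidean_space"
  assumes q: "q \<noteq> 0" and V: "vk = (1 / q) *\<^sub>R ((1 + q) *\<^sub>R y - xk)"
  shows "(1 - q) *\<^sub>R (xk - y) + q *\<^sub>R (xs - y) + q *\<^sub>R ((1 - q) *\<^sub>R (vk - xs) + q *\<^sub>R (y - xs)) = 0"
proof (rule fun_coord_eq)
  fix t and i :: 'a
  show "((1 - q) *\<^sub>R (xk - y) + q *\<^sub>R (xs - y) + q *\<^sub>R ((1 - q) *\<^sub>R (vk - xs) + q *\<^sub>R (y - xs))) t \<bullet> i = 0 t \<bullet> i"
    unfolding V using q by (simp add: inner_simps field_simps)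
qed

lemma vec_hv:
  fixes xk y xp xs :: "nat \<Rightarrow> 'a::euclidean_space"
  assumes q: "0 < q" and L: "L > 0" and al: "\<alpha> = q^2 * L" and lam: "lam = (1 - q) / (1 + q)"
  shows "(1 / q) *\<^sub>R ((1 + q) *\<^sub>R ((1 + lam) *\<^sub>R xp - lam *\<^sub>R xk) - xp) - xs
    = ((1 - q) *\<^sub>R ((1 / q) *\<^sub>R ((1 + q) *\<^sub>R y - xk) - xs) + q *\<^sub>R (y - xs)) - (q / \<alpha>) *\<^sub>R (L *\<^sub>R (y - xp))"
proof -
  have c1: "(1 + q) * (1 + lam) = 2" and c2: "(1 + q) * lam = 1 - q"
    using q unfolding lam by (simp_all add: field_simps)
  have A: "(1 + q) *\<^sub>R ((1 + lam) *\<^sub>R xp - lam *\<^sub>R xk) = 2 *\<^sub>R xp - (1 - q) *\<^sub>R xk"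
    by (simp only: scaleR_right_diff_distrib scaleR_scaleR c1 c2)
  have B: "(q / \<alpha>) *\<^sub>R (L *\<^sub>R (y - xp)) = (1 / q) *\<^sub>R (y - xp)"
  proof -
    have "q / \<alpha> * L = 1 / q" using q L unfolding al by (simp add: field_simps power2_eq_square)
    thus ?thesis by simp
  qed
  show ?thesis unfolding A B
  proof (rule fun_coord_eq)
    fix t and i :: 'a
    show "((1 / q) *\<^sub>R (2 *\<^sub>R xp - (1 - q) *\<^sub>R xk - xp) - xs) t \<bullet> i =
          ((1 - q) *\<^sub>R ((1 / q) *\<^sub>R ((1 + q) *\<^sub>R y - xk) - xs) + q *\<^sub>R (y - xs) - (1 / q) *\<^sub>R (y - xp)) t \<bullet> i"
      using q by (simp add: inner_simps field_simps)
  qed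
qed

context
  fixes X :: "'a::euclidean_space set" and x0 :: 'a and fs :: "nat \<Rightarrow> 'a \<Rightarrow> real"
    and T W :: nat and \<beta> \<alpha> l G :: real
  assumes Xc: "X \<noteq> {}" "compact X" "convex X" and x0: "x0 \<in> X"
    and bpos: "\<beta> \<ge> 0" and al: "0 < \<alpha>" "\<alpha> \<le> l"
    and Fc: "\<forall>t\<in>{1..T}. fs t \<in> Fclass X \<alpha> l G"
begin

lemma clX: "closed X" using Xc by (simp add: compact_imp_closed)
lemma lpos: "l > 0" using al by simp
lemma Lpos: "l + 4 * \<beta> > 0" using lpos bpos by simp

lemma xs_ex: "\<exists>xs. (\<forall>t\<in>{1..T}. xs t \<in> X) \<and> opt_cost X \<beta> T x0 fs = cost \<beta> T x0 fs xs
     \<and> (\<forall>z. (\<forall>t\<in>{1..T}. z t \<in> X) \<longrightarrow> cost \<beta> T x0 fs xs \<le> cost \<beta> T x0 fs z)"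
proof (rule exists_min[OF Xc(2) x0])
  fix t assume "t \<in> {1..T}"
  then have "fs t \<in> Fclass X \<alpha> l G" using Fc by auto
  then show "continuous_on UNIV (fs t)"
    using Fclass_D(4) by (meson differentiable_imp_continuous_within continuous_at_imp_continuous_on)
qed

lemma sc_min:
  assumes xsX: "\<forall>t\<in>{1..T}. xs t \<in> X"
    and xsmin: "\<forall>z. (\<forall>t\<in>{1..T}. z t \<in> X) \<longrightarrow> cost \<beta> T x0 fs xs \<le> cost \<beta> T x0 fs z"
    and z: "\<forall>t\<in>{1..T}. z t \<in> X"
  shows "\<alpha> / 2 * ipT T (z - xs) (z - xs) \<le> cost \<beta> T x0 fs z - cost \<beta> T x0 fs xs"
proof -
  define L where "L = l + 4 * \<beta>"
  define P where "P t = closest_point X (xs t - (1 / (l + 4 * \<beta>)) *\<^sub>R gC fs x0 T \<beta> xs t)" for t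
  define Gv where "Gv = (l + 4 * \<beta>) *\<^sub>R (xs - P)"
  have PX: "\<forall>t\<in>{1..T}. P t \<in> X" unfolding P_def using Xc clX by (auto intro: closest_point_in_set)
  have Pdef: "\<forall>t\<in>{1..T}. P t = closest_point X (xs t - (1 / (l + 4 * \<beta>)) *\<^sub>R gC fs x0 T \<beta> xs t)"
    by (simp add: P_def)
  have gA: "cost \<beta> T x0 fs xs \<ge> cost \<beta> T x0 fs P + ipT T Gv (xs - xs) + ipT T Gv Gv / (2 * (l + 4 * \<beta>))
    + \<alpha> / 2 * ipT T (xs - xs) (xs - xs)"
    unfolding Gv_def using joint_gm[OF Fc bpos Xc(3) clX lpos xsX Pdef] .
  have "cost \<beta> T x0 fs xs \<le> cost \<beta> T x0 fs P" using xsmin PX by auto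
  with gA have "ipT T Gv Gv / (2 * (l + 4 * \<beta>)) \<le> 0" by (simp add: ipT.ip_zero_right ipT.ip_zero_left)
  hence "ipT T Gv Gv \<le> 0" using Lpos by (simp add: divide_le_0_iff)
  hence GG: "ipT T Gv Gv = 0" using ipT_nonneg[of T Gv] by linarith
  have gB: "cost \<beta> T x0 fs z \<ge> cost \<beta> T x0 fs P + ipT T Gv (z - xs) + ipT T Gv Gv / (2 * (l + 4 * \<beta>))
    + \<alpha> / 2 * ipT T (z - xs) (z - xs)"
    unfolding Gv_def using joint_gm[OF Fc bpos Xc(3) clX lpos z Pdef] .
  have "ipT T Gv (z - xs) = 0" using ipT.ip_degen[OF GG] .
  then show ?thesis using gB GG \<open>cost \<beta> T x0 fs xs \<le> cost \<beta> T x0 fs P\<close> by simp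
qed

lemma main_rhgd:
  assumes xsX: "\<forall>t\<in>{1..T}. xs t \<in> X"
    and xsmin: "\<forall>z. (\<forall>t\<in>{1..T}. z t \<in> X) \<longrightarrow> cost \<beta> T x0 fs xs \<le> cost \<beta> T x0 fs z"
  shows "cost \<beta> T x0 fs (RHGD X x0 T W \<beta> (1 / l) (1 / (l + 4 * \<beta>)) fs) - cost \<beta> T x0 fs xs
    \<le> ((l + 4 * \<beta>) / \<alpha>) * (1 - \<alpha> / (l + 4 * \<beta>)) ^ W
        * (cost \<beta> T x0 fs (\<lambda>t. ogd X fs x0 (1 / l) t) - cost \<beta> T x0 fs xs)"
proof -
  define L where "L = l + 4 * \<beta>"
  define x where "x k = XG X fs x0 T W \<beta> (1 / l) (1 / (l + 4 * \<beta>)) k" for k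
  have xK: "\<forall>t\<in>{1..T}. x k t \<in> X" for k
  proof (cases k)
    case 0 then show ?thesis using ogd_in[OF clX Xc(1) x0] by (auto simp: x_def XG0)
  next
    case (Suc j) then show ?thesis using Xc clX by (auto simp: x_def XG_step intro: closest_point_in_set)
  qed
  have stp: "\<forall>t\<in>{1..T}. x (Suc k) t = closest_point X (x k t - (1 / (l + 4 * \<beta>)) *\<^sub>R gC fs x0 T \<beta> (x k) t)" for k
    unfolding x_def using XG_step by blast
  define r where "r k = ipT T (x k - xs) (x k - xs)" for k
  define c where "c k = cost \<beta> T x0 fs (x k) - cost \<beta> T x0 fs xs" for k
  have st: "r (Suc k) \<le> (1 - \<alpha> / L) * r k - (2 / L) * c (Suc k)" for k
  proof -
    have gm: "cost \<beta> T x0 fs xs \<ge> cost \<beta> T x0 fs (x (Suc k)) + ipT T ((l + 4 * \<beta>) *\<^sub>R (x k - x (Suc k))) (xs - x k)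
      + ipT T ((l + 4 * \<beta>) *\<^sub>R (x k - x (Suc k))) ((l + 4 * \<beta>) *\<^sub>R (x k - x (Suc k))) / (2 * (l + 4 * \<beta>))
      + \<alpha> / 2 * ipT T (xs - x k) (xs - x k)"
      using joint_gm[OF Fc bpos Xc(3) clX lpos xsX stp] .
    show ?thesis using ipT.gd_step[OF Lpos gm refl] unfolding r_def c_def L_def by simp
  qed
  have cW: "c W \<le> (L / \<alpha>) * (1 - \<alpha> / L) ^ W * c 0"
  proof (rule gd_chain[where r = r])
    show "0 < L" using Lpos by (simp add: L_def)
    show "0 < \<alpha>" "\<alpha> \<le> L" using al bpos by (auto simp: L_def)
    show "r (Suc k) \<le> (1 - \<alpha> / L) * r k - 2 / L * c (Suc k)" for k by (rule st)
    show "0 \<le> c k" for k using xsmin xK by (simp add: c_def)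
    show "0 \<le> r k" for k by (simp add: r_def ipT_nonneg)
    have "\<alpha> / 2 * r 0 \<le> c 0" unfolding r_def c_def by (rule sc_min[OF xsX xsmin xK])
    thus "r 0 \<le> 2 / \<alpha> * c 0" using al by (simp add: field_simps)
  qed
  have e1: "cost \<beta> T x0 fs (RHGD X x0 T W \<beta> (1 / l) (1 / (l + 4 * \<beta>)) fs) = cost \<beta> T x0 fs (x W)"
    by (rule cost_cong) (simp add: XG_out x_def)
  have e2: "cost \<beta> T x0 fs (x 0) = cost \<beta> T x0 fs (\<lambda>t. ogd X fs x0 (1 / l) t)"
    by (rule cost_cong) (simp add: XG0 x_def)
  show ?thesis using cW unfolding e1 c_def e2 L_def .
qed

lemma main_rhag:
  assumes xsX: "\<forall>t\<in>{1..T}. xs t \<in> X"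
    and xsmin: "\<forall>z. (\<forall>t\<in>{1..T}. z t \<in> X) \<longrightarrow> cost \<beta> T x0 fs xs \<le> cost \<beta> T x0 fs z"
  shows "cost \<beta> T x0 fs (RHAG X x0 T W \<beta> (1 / l) (1 / (l + 4 * \<beta>)) \<alpha> fs) - cost \<beta> T x0 fs xs
    \<le> 2 * (1 - sqrt (\<alpha> * (1 / (l + 4 * \<beta>)))) ^ W
        * (cost \<beta> T x0 fs (\<lambda>t. ogd X fs x0 (1 / l) t) - cost \<beta> T x0 fs xs)"
proof -
  define L where "L = l + 4 * \<beta>"
  define q where "q = sqrt (\<alpha> * (1 / (l + 4 * \<beta>)))"
  define lam where "lam = (1 - q) / (1 + q)"
  have Lp: "L > 0" using Lpos by (simp add: L_def)
  have aL: "\<alpha> / L \<le> 1" "0 < \<alpha> / L" using al bpos Lp by (auto simp: L_def)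
  have qa: "q^2 = \<alpha> / L" using aL by (simp add: q_def L_def)
  have q0: "0 < q" using aL by (simp add: q_def L_def)
  have q1: "q \<le> 1" using aL by (simp add: q_def L_def)
  have alq: "\<alpha> = q^2 * L" using qa Lp by (simp add: field_simps)
  define xa where "xa k = XA X fs x0 T W \<beta> (1 / l) (1 / (l + 4 * \<beta>)) lam k" for k
  define ya where "ya k = YA X fs x0 T W \<beta> (1 / l) (1 / (l + 4 * \<beta>)) lam k" for k
  define V where "V k = (1 / q) *\<^sub>R ((1 + q) *\<^sub>R ya k - xa k)" for k
  have xK: "\<forall>t\<in>{1..T}. xa k t \<in> X" for k
  proof (cases k)
    case 0 then show ?thesis using ogd_in[OF clX Xc(1) x0] by (auto simp: xa_def XA0)
  next
    case (Suc j) then show ?thesis using Xc clX by (auto simp: xa_def XA_step intro: closest_point_in_set)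
  qed
  have stp: "\<forall>t\<in>{1..T}. xa (Suc k) t = closest_point X (ya k t - (1 / (l + 4 * \<beta>)) *\<^sub>R gC fs x0 T \<beta> (ya k) t)" for k
    unfolding xa_def ya_def using XA_step(1) by blast
  have yS: "ya (Suc k) = (1 + lam) *\<^sub>R xa (Suc k) - lam *\<^sub>R xa k" for k
  proof
    fix t show "ya (Suc k) t = ((1 + lam) *\<^sub>R xa (Suc k) - lam *\<^sub>R xa k) t"
    proof (cases "t \<in> {1..T}")
      case True then show ?thesis using XA_step(2)[OF True] by (simp add: xa_def ya_def)
    next
      case False
      then have "xa j t = 0" "ya j t = 0" for j unfolding xa_def ya_def XA_def YA_def by auto
      then show ?thesis by simp
    qed
  qed
  have V0: "V 0 = xa 0"
  proof -
    have "ya 0 = xa 0" by (simp add: xa_def ya_def YA0)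
    hence "(1 + q) *\<^sub>R ya 0 - xa 0 = q *\<^sub>R xa 0" by (simp add: algebra_simps)
    thus ?thesis using q0 by (simp add: V_def)
  qed
  define \<Phi> where "\<Phi> k = cost \<beta> T x0 fs (xa k) - cost \<beta> T x0 fs xs + \<alpha> / 2 * ipT T (V k - xs) (V k - xs)" for k
  have st: "\<Phi> (Suc k) \<le> (1 - q) * \<Phi> k" for k
  proof -
    have gm1: "cost \<beta> T x0 fs (xa k) \<ge> cost \<beta> T x0 fs (xa (Suc k)) + ipT T ((l + 4 * \<beta>) *\<^sub>R (ya k - xa (Suc k))) (xa k - ya k)
      + ipT T ((l + 4 * \<beta>) *\<^sub>R (ya k - xa (Suc k))) ((l + 4 * \<beta>) *\<^sub>R (ya k - xa (Suc k))) / (2 * (l + 4 * \<beta>))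
      + \<alpha> / 2 * ipT T (xa k - ya k) (xa k - ya k)"
      using joint_gm[OF Fc bpos Xc(3) clX lpos xK stp] .
    have gm2: "cost \<beta> T x0 fs xs \<ge> cost \<beta> T x0 fs (xa (Suc k)) + ipT T ((l + 4 * \<beta>) *\<^sub>R (ya k - xa (Suc k))) (xs - ya k)
      + ipT T ((l + 4 * \<beta>) *\<^sub>R (ya k - xa (Suc k))) ((l + 4 * \<beta>) *\<^sub>R (ya k - xa (Suc k))) / (2 * (l + 4 * \<beta>))
      + \<alpha> / 2 * ipT T (xs - ya k) (xs - ya k)"
      using joint_gm[OF Fc bpos Xc(3) clX lpos xsX stp] .
    have hv: "V (Suc k) - xs = ((1 - q) *\<^sub>R (V k - xs) + q *\<^sub>R (ya k - xs)) - (q / \<alpha>) *\<^sub>R ((l + 4 * \<beta>) *\<^sub>R (ya k - xa (Suc k)))"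
      unfolding V_def yS
      using vec_hv[OF q0 Lp alq lam_def, of "xa (Suc k)" "xa k" xs "ya k"] by (simp add: L_def)
    have hz: "(1 - q) *\<^sub>R (xa k - ya k) + q *\<^sub>R (xs - ya k) + q *\<^sub>R ((1 - q) *\<^sub>R (V k - xs) + q *\<^sub>R (ya k - xs)) = 0"
      using q0 by (intro vec_hz) (auto simp: V_def)
    have "0 < l + 4 * \<beta>" "q^2 = \<alpha> / (l + 4 * \<beta>)" using Lp qa by (simp_all add: L_def)
    from ipT.nest_step[OF this(1) q0 q1 this(2) gm1 gm2 hv hz]
    show ?thesis by (simp add: \<Phi>_def)
  qed
  have A: "\<Phi> W \<le> (1 - q) ^ W * \<Phi> 0" by (rule nest_chain[where \<Phi>=\<Phi>, OF q1 st])
  have B: "\<Phi> 0 \<le> 2 * (cost \<beta> T x0 fs (xa 0) - cost \<beta> T x0 fs xs)"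
    using sc_min[OF xsX xsmin xK[of 0]] unfolding \<Phi>_def V0 by simp
  have C: "cost \<beta> T x0 fs (xa W) - cost \<beta> T x0 fs xs \<le> \<Phi> W"
    using al ipT_nonneg[of T "V W - xs"] by (simp add: \<Phi>_def)
  have D: "0 \<le> (1 - q) ^ W" using q1 by simp
  have E: "(1 - q) ^ W * \<Phi> 0 \<le> (1 - q) ^ W * (2 * (cost \<beta> T x0 fs (xa 0) - cost \<beta> T x0 fs xs))"
    using B D by (rule mult_left_mono)
  have fin: "cost \<beta> T x0 fs (xa W) - cost \<beta> T x0 fs xs
     \<le> 2 * (1 - q) ^ W * (cost \<beta> T x0 fs (xa 0) - cost \<beta> T x0 fs xs)"
  proof -
    have "(1 - q) ^ W * (2 * (cost \<beta> T x0 fs (xa 0) - cost \<beta> T x0 fs xs))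
       = 2 * (1 - q) ^ W * (cost \<beta> T x0 fs (xa 0) - cost \<beta> T x0 fs xs)" by simp
    thus ?thesis using A C E by linarith
  qed
  have e1: "cost \<beta> T x0 fs (RHAG X x0 T W \<beta> (1 / l) (1 / (l + 4 * \<beta>)) \<alpha> fs) = cost \<beta> T x0 fs (xa W)"
    by (rule cost_cong) (simp add: XA_out xa_def lam_def q_def)
  have e2: "cost \<beta> T x0 fs (xa 0) = cost \<beta> T x0 fs (\<lambda>t. ogd X fs x0 (1 / l) t)"
    by (rule cost_cong) (simp add: XA0 xa_def)
  show ?thesis using fin unfolding e1 e2 q_def .
qed

end



lemma per_fs:
  fixes X :: "'a::euclidean_space set" and x0 :: 'a
    and \<beta> \<alpha> l G Lpath :: real and T W :: nat
  assumes Xc: "X \<noteq> {}" "compact X" "convex X" and x0: "x0 \<in> X"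
    and bpos: "\<beta> \<ge> 0" and al: "0 < \<alpha>" "\<alpha> \<le> l" and Gpos: "G > 0"
    and fsP: "fs \<in> pathset X x0 T \<alpha> l G Lpath"
  shows "cost \<beta> T x0 fs (RHGD X x0 T W \<beta> (1 / l) (1 / (l + 4 * \<beta>)) fs) - opt_cost X \<beta> T x0 fs
      \<le> ((l + 4 * \<beta>) / \<alpha>) * ((\<beta> / l + 1) * (G / (1 - sqrt (1 - \<alpha> / l)))) * (1 - 1 / ((l + 4 * \<beta>) / \<alpha>)) ^ W * Lpath
    \<and> cost \<beta> T x0 fs (RHAG X x0 T W \<beta> (1 / l) (1 / (l + 4 * \<beta>)) \<alpha> fs) - opt_cost X \<beta> T x0 fs
      \<le> 2 * ((\<beta> / l + 1) * (G / (1 - sqrt (1 - \<alpha> / l)))) * (1 - 1 / sqrt ((l + 4 * \<beta>) / \<alpha>)) ^ W * Lpath"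
proof -
  define \<delta> where "\<delta> = (\<beta> / l + 1) * (G / (1 - sqrt (1 - \<alpha> / l)))"
  define L where "L = l + 4 * \<beta>"
  have Fc: "\<forall>t\<in>{1..T}. fs t \<in> Fclass X \<alpha> l G" and dL: "(\<Sum>t=1..T. norm (theta X x0 fs t - theta X x0 fs (t - 1))) \<le> Lpath"
    using fsP by (auto simp: pathset_def)
  have lpos: "l > 0" using al by simp
  have Lp: "L > 0" using lpos bpos by (simp add: L_def)
  have d0: "\<delta> \<ge> 0"
  proof -
    have "0 < \<alpha> / l" using al by simp
    hence "sqrt (1 - \<alpha> / l) < 1" by simp
    thus ?thesis unfolding \<delta>_def using bpos lpos Gpos by (intro mult_nonneg_nonneg divide_nonneg_pos) auto
  qed
  obtain xs where xsX: "\<forall>t\<in>{1..T}. xs t \<in> X" and opt: "opt_cost X \<beta> T x0 fs = cost \<beta> T x0 fs xs"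
    and xsmin: "\<forall>z. (\<forall>t\<in>{1..T}. z t \<in> X) \<longrightarrow> cost \<beta> T x0 fs xs \<le> cost \<beta> T x0 fs z"
    using xs_ex[OF Xc x0 bpos al Fc] by blast
  define C0 where "C0 = cost \<beta> T x0 fs (\<lambda>t. ogd X fs x0 (1 / l) t) - cost \<beta> T x0 fs xs"
  have c0: "C0 \<le> \<delta> * Lpath"
  proof -
    have "C0 \<le> \<delta> * (\<Sum>t=1..T. norm (theta X x0 fs t - theta X x0 fs (t - 1)))"
      unfolding C0_def \<delta>_def using ogd_bound[OF Xc(2,3,1) x0 al bpos _ Fc xsX] Gpos by simp
    also have "\<dots> \<le> \<delta> * Lpath" using dL d0 by (rule mult_left_mono)
    finally show ?thesis .
  qed
  have r1: "cost \<beta> T x0 fs (RHGD X x0 T W \<beta> (1 / l) (1 / L) fs) - cost \<beta> T x0 fs xs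
     \<le> (L / \<alpha>) * (1 - \<alpha> / L) ^ W * C0"
    unfolding C0_def L_def by (rule main_rhgd[OF Xc x0 bpos al Fc xsX xsmin])
  have r2: "cost \<beta> T x0 fs (RHAG X x0 T W \<beta> (1 / l) (1 / L) \<alpha> fs) - cost \<beta> T x0 fs xs
     \<le> 2 * (1 - sqrt (\<alpha> * (1 / L))) ^ W * C0"
    unfolding C0_def L_def by (rule main_rhag[OF Xc x0 bpos al Fc xsX xsmin])
  have f1: "0 \<le> (L / \<alpha>) * (1 - \<alpha> / L) ^ W"
    using al bpos Lp by (intro mult_nonneg_nonneg) (auto simp: L_def)
  have "\<alpha> / L \<le> 1" using al bpos Lp by (simp add: L_def)
  hence sq1: "sqrt (\<alpha> * (1 / L)) \<le> 1" by simp
  have f2: "0 \<le> 2 * (1 - sqrt (\<alpha> * (1 / L))) ^ W" using sq1 by simp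
  have q1: "1 - 1 / (L / \<alpha>) = 1 - \<alpha> / L" by simp
  have q2: "1 / sqrt (L / \<alpha>) = sqrt (\<alpha> * (1 / L))" by (simp add: real_sqrt_divide)
  have A: "(L / \<alpha>) * (1 - \<alpha> / L) ^ W * C0 \<le> (L / \<alpha>) * (1 - \<alpha> / L) ^ W * (\<delta> * Lpath)"
    using c0 f1 by (rule mult_left_mono)
  have B: "2 * (1 - sqrt (\<alpha> * (1 / L))) ^ W * C0 \<le> 2 * (1 - sqrt (\<alpha> * (1 / L))) ^ W * (\<delta> * Lpath)"
    using c0 f2 by (rule mult_left_mono)
  have A2: "(L / \<alpha>) * (1 - \<alpha> / L) ^ W * (\<delta> * Lpath) = (L / \<alpha>) * \<delta> * (1 - \<alpha> / L) ^ W * Lpath"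
    by (simp only: mult_ac)
  have B2: "2 * (1 - sqrt (\<alpha> * (1 / L))) ^ W * (\<delta> * Lpath) = 2 * \<delta> * (1 - sqrt (\<alpha> * (1 / L))) ^ W * Lpath"
    by (simp only: mult_ac)
  have "cost \<beta> T x0 fs (RHGD X x0 T W \<beta> (1 / l) (1 / L) fs) - opt_cost X \<beta> T x0 fs
      \<le> (L / \<alpha>) * \<delta> * (1 - 1 / (L / \<alpha>)) ^ W * Lpath"
    unfolding opt q1 using r1 A A2 by linarith
  moreover have "cost \<beta> T x0 fs (RHAG X x0 T W \<beta> (1 / l) (1 / L) \<alpha> fs) - opt_cost X \<beta> T x0 fs
      \<le> 2 * \<delta> * (1 - 1 / sqrt (L / \<alpha>)) ^ W * Lpath"
    unfolding opt q2 using r2 B B2 by linarith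
  ultimately show ?thesis unfolding \<delta>_def L_def by blast
qed


theorem theorem2:
  fixes X :: "'a::euclidean_space set" and x0 :: 'a
    and D \<beta> \<alpha> l G Lpath :: real and T W :: nat
  assumes "X \<noteq> {}" and "compact X" and "convex X"
    and "\<forall>x\<in>X. \<forall>y\<in>X. norm (x - y) \<le> D"
    and "\<beta> \<ge> 0" and "x0 \<in> X" and "T \<ge> 1"
    and "0 < \<alpha>" and "\<alpha> \<le> l" and "G > 0"
    and "0 \<le> Lpath" and "Lpath \<le> D * real T"
  defines "\<gamma> \<equiv> 1 / l"
    and "\<eta> \<equiv> 1 / (l + 4 * \<beta>)"
    and "\<delta> \<equiv> (\<beta> / l + 1) * (G / (1 - sqrt (1 - \<alpha> / l)))"
    and "Qf \<equiv> (l + 4 * \<beta>) / \<alpha>"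
  shows "Reg X \<beta> T x0 \<alpha> l G Lpath (RHGD X x0 T W \<beta> \<gamma> \<eta>)
           \<le> ereal (Qf * \<delta> * (1 - 1 / Qf) ^ W * Lpath)
       \<and> Reg X \<beta> T x0 \<alpha> l G Lpath (RHAG X x0 T W \<beta> \<gamma> \<eta> \<alpha>)
           \<le> ereal (2 * \<delta> * (1 - 1 / sqrt Qf) ^ W * Lpath)"
proof -
  have l0: "l > 0" using assms by simp
  have H: "\<forall>fs\<in>pathset X x0 T \<alpha> l G Lpath.
      cost \<beta> T x0 fs (RHGD X x0 T W \<beta> \<gamma> \<eta> fs) - opt_cost X \<beta> T x0 fs \<le> Qf * \<delta> * (1 - 1 / Qf) ^ W * Lpath
    \<and> cost \<beta> T x0 fs (RHAG X x0 T W \<beta> \<gamma> \<eta> \<alpha> fs) - opt_cost X \<beta> T x0 fs \<le> 2 * \<delta> * (1 - 1 / sqrt Qf) ^ W * Lpath"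
  proof
    fix fs assume fs: "fs \<in> pathset X x0 T \<alpha> l G Lpath"
    show "cost \<beta> T x0 fs (RHGD X x0 T W \<beta> \<gamma> \<eta> fs) - opt_cost X \<beta> T x0 fs \<le> Qf * \<delta> * (1 - 1 / Qf) ^ W * Lpath
    \<and> cost \<beta> T x0 fs (RHAG X x0 T W \<beta> \<gamma> \<eta> \<alpha> fs) - opt_cost X \<beta> T x0 fs \<le> 2 * \<delta> * (1 - 1 / sqrt Qf) ^ W * Lpath"
      unfolding \<gamma>_def \<eta>_def \<delta>_def Qf_def
      using per_fs[OF assms(1,2,3,6,5,8,9,10) fs, of W] by simp
  qed
  show ?thesis
  proof
    show "Reg X \<beta> T x0 \<alpha> l G Lpath (RHGD X x0 T W \<beta> \<gamma> \<eta>) \<le> ereal (Qf * \<delta> * (1 - 1 / Qf) ^ W * Lpath)"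
      unfolding Reg_def using H by (intro SUP_least) auto
    show "Reg X \<beta> T x0 \<alpha> l G Lpath (RHAG X x0 T W \<beta> \<gamma> \<eta> \<alpha>) \<le> ereal (2 * \<delta> * (1 - 1 / sqrt Qf) ^ W * Lpath)"
      unfolding Reg_def using H by (intro SUP_least) auto
  qed
qed

end
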